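(* Let $\gamma\in\mathcal{C}$ have an outer basepoint. If $\gamma$ is not simple, then $\gamma$ has an outwards loop.
   Context: A curve is a map $\gamma:[0,1]\to\mathbb{R}^2$ with $\gamma(0)=\gamma(1)$ (basepoint), regular and generic (finitely many self-intersections, each transverse double point); $\mathcal{C}$ is the set of such curves. Faces: components of $\mathbb{R}^2\setminus[\gamma]$, $F_{ext}$ unbounded; $wn$ winding number. Outer basepoint: $\gamma(0)$ is incident to exactly two faces, $F_{ext}$ and a face $F$ with $wn(F,\gamma)=\pm1$. Direct split at self-intersection $v=\gamma(t)=\gamma(t^* )$, $t<t^*$: the closed curve $\gamma|_{[t,t^*]}$ based at $v$. A loop is a direct split $\gamma_v$ that is a simple closed curve (other strands of $\gamma$ may cross it). A loop $\gamma_v$ is outwards if the two edges of $\gamma$ incident to $v$ that do not belong to $\gamma_v$ both lie outside the interior region of $\gamma_v$. *)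

theory Defs
  imports "HOL-Complex_Analysis.Winding_Numbers"
begin

text \<open>Curves are maps [0,1] -> R^2, with R^2 identified with the complex plane.\<close>

definition regular_curve :: "(real \<Rightarrow> complex) \<Rightarrow> bool" where
  "regular_curve \<gamma> \<longleftrightarrow> \<gamma> 0 = \<gamma> 1 \<and>
     (\<exists>\<gamma>'. continuous_on {0..1} \<gamma>' \<and> \<gamma>' 0 = \<gamma>' 1 \<and>
        (\<forall>t\<in>{0..1}. (\<gamma> has_vector_derivative \<gamma>' t) (at t within {0..1}) \<and> \<gamma>' t \<noteq> 0))"

definition tangent :: "(real \<Rightarrow> complex) \<Rightarrow> real \<Rightarrow> complex" where
  "tangent \<gamma> t = vector_derivative \<gamma> (at t within {0..1})"

text \<open>Self-intersection points (parameters taken in [0,1), since gamma 0 = gamma 1).\<close>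
definition self_intersections :: "(real \<Rightarrow> complex) \<Rightarrow> complex set" where
  "self_intersections \<gamma> =
     {p. \<exists>s u. s \<in> {0..<1} \<and> u \<in> {0..<1} \<and> s \<noteq> u \<and> \<gamma> s = p \<and> \<gamma> u = p}"

text \<open>Generic: finitely many self-intersections, each a transverse double point.\<close>
definition generic_curve :: "(real \<Rightarrow> complex) \<Rightarrow> bool" where
  "generic_curve \<gamma> \<longleftrightarrow> finite (self_intersections \<gamma>) \<and>
     (\<forall>p\<in>self_intersections \<gamma>. card {s\<in>{0..<1}. \<gamma> s = p} = 2 \<and>
        (\<forall>s u. s \<in> {0..<1} \<and> u \<in> {0..<1} \<and> s \<noteq> u \<and> \<gamma> s = p \<and> \<gamma> u = p \<longrightarrow>
           Im (cnj (tangent \<gamma> s) * tangent \<gamma> u) \<noteq> 0))"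

definition curveC :: "(real \<Rightarrow> complex) \<Rightarrow> bool" where
  "curveC \<gamma> \<longleftrightarrow> regular_curve \<gamma> \<and> generic_curve \<gamma>"

definition faces :: "(real \<Rightarrow> complex) \<Rightarrow> complex set set" where
  "faces \<gamma> = components (- path_image \<gamma>)"

definition ext_face :: "(real \<Rightarrow> complex) \<Rightarrow> complex set" where
  "ext_face \<gamma> = outside (path_image \<gamma>)"

definition face_wn :: "complex set \<Rightarrow> (real \<Rightarrow> complex) \<Rightarrow> complex" where
  "face_wn F \<gamma> = winding_number \<gamma> (SOME z. z \<in> F)"

text \<open>A face F is incident to a point p if p lies in the closure of F.\<close>
definition outer_basepoint :: "(real \<Rightarrow> complex) \<Rightarrow> bool" where
  "outer_basepoint \<gamma> \<longleftrightarrow>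
     (let Inc = {F \<in> faces \<gamma>. \<gamma> 0 \<in> closure F} in
        card Inc = 2 \<and> ext_face \<gamma> \<in> Inc \<and>
        (\<exists>F\<in>Inc. F \<noteq> ext_face \<gamma> \<and> (face_wn F \<gamma> = 1 \<or> face_wn F \<gamma> = -1)))"

definition direct_split :: "(real \<Rightarrow> complex) \<Rightarrow> real \<Rightarrow> real \<Rightarrow> (real \<Rightarrow> complex)" where
  "direct_split \<gamma> t t' = subpath t t' \<gamma>"

definition is_split_pair :: "(real \<Rightarrow> complex) \<Rightarrow> real \<Rightarrow> real \<Rightarrow> bool" where
  "is_split_pair \<gamma> t t' \<longleftrightarrow> 0 \<le> t \<and> t < t' \<and> t' < 1 \<and> \<gamma> t = \<gamma> t'"

definition is_loop :: "(real \<Rightarrow> complex) \<Rightarrow> real \<Rightarrow> real \<Rightarrow> bool" where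
  "is_loop \<gamma> t t' \<longleftrightarrow> is_split_pair \<gamma> t t' \<and> simple_path (direct_split \<gamma> t t')"

definition periodic_ext :: "(real \<Rightarrow> complex) \<Rightarrow> real \<Rightarrow> complex" where
  "periodic_ext \<gamma> s = \<gamma> (frac s)"

text \<open>Outwards loop: the two edges of gamma at v not belonging to the loop (the one arriving
  at parameter t and the one leaving at parameter t') lie outside the interior region of the
  loop. Since an edge meets the loop only at its endpoints, this is equivalent to the parts of
  these edges close to v lying outside the interior.\<close>
definition outwards_loop :: "(real \<Rightarrow> complex) \<Rightarrow> real \<Rightarrow> real \<Rightarrow> bool" where
  "outwards_loop \<gamma> t t' \<longleftrightarrow> is_loop \<gamma> t t' \<and>
     (\<exists>\<epsilon>>0. \<forall>\<delta>. 0 < \<delta> \<and> \<delta> < \<epsilon> \<longrightarrow>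
        periodic_ext \<gamma> (t - \<delta>) \<notin> inside (path_image (direct_split \<gamma> t t')) \<and>
        periodic_ext \<gamma> (t' + \<delta>) \<notin> inside (path_image (direct_split \<gamma> t t')))"

end

theory Submission
  imports Defs
begin

definition cA :: "complex \<Rightarrow> complex \<Rightarrow> complex \<Rightarrow> real" where
  "cA a b z = - Im (cnj b * z) / Im (cnj a * b)"
definition cB :: "complex \<Rightarrow> complex \<Rightarrow> complex \<Rightarrow> real" where
  "cB a b z = Im (cnj a * z) / Im (cnj a * b)"

lemma cA_add: "cA a b (x + y) = cA a b x + cA a b y"
  by (simp add: cA_def distrib_left add_divide_distrib)
lemma cB_add: "cB a b (x + y) = cB a b x + cB a b y"
  by (simp add: cB_def distrib_left add_divide_distrib)
lemma cA_diff: "cA a b (x - y) = cA a b x - cA a b y"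
  by (simp add: cA_def right_diff_distrib diff_divide_distrib)
lemma cB_diff: "cB a b (x - y) = cB a b x - cB a b y"
  by (simp add: cB_def right_diff_distrib diff_divide_distrib)
lemma cA_scale: "cA a b (of_real c * x) = c * cA a b x"
  by (simp add: cA_def algebra_simps)
lemma cB_scale: "cB a b (of_real c * x) = c * cB a b x"
  by (simp add: cB_def algebra_simps)
lemma cA_scaleR: "cA a b (c *\<^sub>R x) = c * cA a b x"
  by (simp add: cA_def scaleR_conv_of_real algebra_simps)
lemma cB_scaleR: "cB a b (c *\<^sub>R x) = c * cB a b x"
  by (simp add: cB_def scaleR_conv_of_real algebra_simps)
lemma cA_a: "Im (cnj a * b) \<noteq> 0 \<Longrightarrow> cA a b a = 1"
  by (simp add: cA_def)
lemma cA_b: "cA a b b = 0"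
  by (simp add: cA_def)
lemma cB_a: "cB a b a = 0"
  by (simp add: cB_def)
lemma cB_b: "Im (cnj a * b) \<noteq> 0 \<Longrightarrow> cB a b b = 1"
  by (simp add: cB_def)
lemma cA_0[simp]: "cA a b 0 = 0" by (simp add: cA_def)
lemma cB_0[simp]: "cB a b 0 = 0" by (simp add: cB_def)

lemma aux_decomp:
  fixes aa ab ba bb za zb D :: real
  assumes "D \<noteq> 0" "D = aa*bb - ab*ba"
  shows "za = (-(ba*zb - bb*za))/D * aa + (aa*zb - ab*za)/D * ba"
proof -
  have eq: "(-(ba*zb - bb*za)) * aa + (aa*zb - ab*za) * ba = za * D"
    by (simp add: assms(2) algebra_simps)
  have "(-(ba*zb - bb*za))/D * aa + (aa*zb - ab*za)/D * ba = ((-(ba*zb - bb*za)) * aa + (aa*zb - ab*za) * ba) / D"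
    by (simp add: add_divide_distrib)
  also have "\<dots> = (za * D) / D" by (simp only: eq)
  also have "\<dots> = za" using assms(1) by simp
  finally show ?thesis by simp
qed

lemma aux_cross:
  fixes aa ab ba bb xa xb ya yb D :: real
  assumes "D \<noteq> 0" "D = aa*bb - ab*ba"
  shows "xb * ya - xa * yb = D * ((aa*xb - ab*xa)/D * ((-(ba*yb - bb*ya))/D) - (-(ba*xb - bb*xa))/D * ((aa*yb - ab*ya)/D))"
proof -
  have eq: "(aa*xb - ab*xa) * (-(ba*yb - bb*ya)) - (-(ba*xb - bb*xa)) * (aa*yb - ab*ya) = (xb * ya - xa * yb) * D"
    by (simp add: assms(2) algebra_simps)
  have "D * ((aa*xb - ab*xa)/D * ((-(ba*yb - bb*ya))/D) - (-(ba*xb - bb*xa))/D * ((aa*yb - ab*ya)/D))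
     = D * (((aa*xb - ab*xa) * (-(ba*yb - bb*ya)) - (-(ba*xb - bb*xa)) * (aa*yb - ab*ya)) / (D*D))"
    by (simp only: times_divide_times_eq diff_divide_distrib[symmetric])
  also have "\<dots> = D * (((xb * ya - xa * yb) * D) / (D*D))" by (simp only: eq)
  also have "\<dots> = xb * ya - xa * yb" using assms(1) by simp
  finally show ?thesis by simp
qed

lemma cA_expl: "cA a b z = (-(Re b * Im z - Im b * Re z)) / (Re a * Im b - Im a * Re b)"
  by (simp add: cA_def)
lemma cB_expl: "cB a b z = (Re a * Im z - Im a * Re z) / (Re a * Im b - Im a * Re b)"
  by (simp add: cB_def)

lemma c_decomp:
  assumes "Im (cnj a * b) \<noteq> 0"
  shows "z = of_real (cA a b z) * a + of_real (cB a b z) * b"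
proof -
  have D: "Re a * Im b - Im a * Re b \<noteq> 0" using assms by simp
  have 1: "Re z = (-(Re b * Im z - Im b * Re z)) / (Re a * Im b - Im a * Re b) * Re a + (Re a * Im z - Im a * Re z) / (Re a * Im b - Im a * Re b) * Re b"
    by (rule aux_decomp[OF D refl])
  have 2: "Im z = (-(Re b * Im z - Im b * Re z)) / (Re a * Im b - Im a * Re b) * Im a + (Re a * Im z - Im a * Re z) / (Re a * Im b - Im a * Re b) * Im b"
    using aux_decomp[where aa="Im a" and ab="- Re a" and ba="Im b" and bb="- Re b" and za="Im z" and zb="- Re z" and D="Re a * Im b - Im a * Re b"] D
    by (simp add: algebra_simps)
  show ?thesis unfolding complex_eq_iff cA_expl cB_expl
    using 1 2 by simp
qed

lemma c_cross:
  assumes "Im (cnj a * b) \<noteq> 0"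
  shows "Im (x * cnj y) = Im (cnj a * b) * (cB a b x * cA a b y - cA a b x * cB a b y)"
proof -
  have D: "Re a * Im b - Im a * Re b \<noteq> 0" using assms by simp
  have "Im (x * cnj y) = Im x * Re y - Re x * Im y" by simp
  also have "\<dots> = (Re a * Im b - Im a * Re b) * ((Re a * Im x - Im a * Re x) / (Re a * Im b - Im a * Re b) * ((-(Re b * Im y - Im b * Re y)) / (Re a * Im b - Im a * Re b)) - (-(Re b * Im x - Im b * Re x)) / (Re a * Im b - Im a * Re b) * ((Re a * Im y - Im a * Re y) / (Re a * Im b - Im a * Re b)))"
    by (rule aux_cross[OF D refl])
  also have "\<dots> = Im (cnj a * b) * (cB a b x * cA a b y - cA a b x * cB a b y)"
    unfolding cA_expl cB_expl by simp
  finally show ?thesis .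
qed

lemma cA_bound: "Im (cnj a * b) \<noteq> 0 \<Longrightarrow> \<bar>cA a b z\<bar> \<le> norm b * norm z / \<bar>Im (cnj a * b)\<bar>"
proof -
  assume D: "Im (cnj a * b) \<noteq> 0"
  have "\<bar>Im (cnj b * z)\<bar> \<le> norm (cnj b * z)" by (rule abs_Im_le_cmod)
  also have "\<dots> = norm b * norm z" by (simp add: norm_mult)
  finally show ?thesis using D by (simp add: cA_def abs_div divide_right_mono)
qed

lemma cB_bound: "Im (cnj a * b) \<noteq> 0 \<Longrightarrow> \<bar>cB a b z\<bar> \<le> norm a * norm z / \<bar>Im (cnj a * b)\<bar>"
proof -
  assume D: "Im (cnj a * b) \<noteq> 0"
  have "\<bar>Im (cnj a * z)\<bar> \<le> norm (cnj a * z)" by (rule abs_Im_le_cmod)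
  also have "\<dots> = norm a * norm z" by (simp add: norm_mult)
  finally show ?thesis using D by (simp add: cB_def abs_div divide_right_mono)
qed

lemma c_norm_bound:
  assumes "Im (cnj a * b) \<noteq> 0"
  shows "norm z \<le> \<bar>cA a b z\<bar> * norm a + \<bar>cB a b z\<bar> * norm b"
proof -
  have "norm z = norm (of_real (cA a b z) * a + of_real (cB a b z) * b)"
    using c_decomp[OF assms] by metis
  also have "\<dots> \<le> norm (of_real (cA a b z) * a) + norm (of_real (cB a b z) * b)"
    by (rule norm_triangle_ineq)
  finally show ?thesis by (simp add: norm_mult)
qed

lemma frac_neg_small: "-1 < (u::real) \<Longrightarrow> u < 0 \<Longrightarrow> frac u = u + 1"
proof -
  assume "-1 < u" "u < 0"
  then have "floor u = -1" by (simp add: floor_eq_iff)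
  then show ?thesis by (simp add: frac_def)
qed

lemma approx_deriv:
  assumes deriv: "\<forall>s\<in>{0..1}. (\<gamma> has_vector_derivative g' s) (at s within {0..1})"
    and g01: "g' 0 = g' 1" and c01: "\<gamma> 0 = \<gamma> 1" and tau: "0 \<le> \<tau>" "\<tau> < 1" and k: "\<kappa> > 0"
  shows "\<exists>h>0. \<forall>u. \<bar>u\<bar> < h \<longrightarrow> norm (periodic_ext \<gamma> (\<tau>+u) - \<gamma> \<tau> - of_real u * g' \<tau>) \<le> \<kappa> * \<bar>u\<bar>"
proof -
  have D: "\<exists>d>0. \<forall>y\<in>{0..1}. \<bar>y - s\<bar> < d \<longrightarrow> norm (\<gamma> y - \<gamma> s - of_real (y - s) * g' s) \<le> \<kappa> * \<bar>y - s\<bar>"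
    if "s \<in> {0..1}" for s
  proof -
    have "(\<gamma> has_derivative (\<lambda>x. x *\<^sub>R g' s)) (at s within {0..1})"
      using deriv that by (simp add: has_vector_derivative_def)
    then obtain d where "d>0" and d: "\<forall>y\<in>{0..1}. norm(y - s) < d \<longrightarrow> norm (\<gamma> y - \<gamma> s - (y - s) *\<^sub>R g' s) \<le> \<kappa> * norm (y - s)"
      using k unfolding has_derivative_within_alt by blast
    then show ?thesis by (intro exI[of _ d]) (auto simp: scaleR_conv_of_real)
  qed
  show ?thesis
  proof (cases "\<tau> = 0")
    case False
    obtain d where d0: "d>0" and d: "\<forall>y\<in>{0..1}. \<bar>y - \<tau>\<bar> < d \<longrightarrow> norm (\<gamma> y - \<gamma> \<tau> - of_real (y - \<tau>) * g' \<tau>) \<le> \<kappa> * \<bar>y - \<tau>\<bar>"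
      using D[of \<tau>] tau by auto
    show ?thesis
    proof (intro exI[of _ "min d (min \<tau> (1-\<tau>))"] conjI allI impI)
      show "0 < min d (min \<tau> (1 - \<tau>))" using d0 tau False by auto
      fix u :: real assume u: "\<bar>u\<bar> < min d (min \<tau> (1 - \<tau>))"
      then have "frac (\<tau>+u) = \<tau>+u" using tau by (auto simp: frac_eq)
      then show "norm (periodic_ext \<gamma> (\<tau>+u) - \<gamma> \<tau> - of_real u * g' \<tau>) \<le> \<kappa> * \<bar>u\<bar>"
        using d[rule_format, of "\<tau>+u"] u tau by (auto simp: periodic_ext_def abs_less_iff)
    qed
  next
    case True
    obtain d0 where d00: "d0>0" and d0: "\<forall>y\<in>{0..1}. \<bar>y - 0\<bar> < d0 \<longrightarrow> norm (\<gamma> y - \<gamma> 0 - of_real (y - 0) * g' 0) \<le> \<kappa> * \<bar>y - 0\<bar>"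
      using D[of 0] by auto
    obtain d1 where d10: "d1>0" and d1: "\<forall>y\<in>{0..1}. \<bar>y - 1\<bar> < d1 \<longrightarrow> norm (\<gamma> y - \<gamma> 1 - of_real (y - 1) * g' 1) \<le> \<kappa> * \<bar>y - 1\<bar>"
      using D[of 1] by auto
    show ?thesis
    proof (intro exI[of _ "min d0 (min d1 (1/2))"] conjI allI impI)
      show "0 < min d0 (min d1 (1/2))" using d00 d10 by auto
      fix u :: real assume u: "\<bar>u\<bar> < min d0 (min d1 (1/2))"
      show "norm (periodic_ext \<gamma> (\<tau>+u) - \<gamma> \<tau> - of_real u * g' \<tau>) \<le> \<kappa> * \<bar>u\<bar>"
      proof (cases "u \<ge> 0")
        case True
        then have "frac u = u" using u by (auto simp: frac_eq)
        then show ?thesis using d0[rule_format, of u] u True \<open>\<tau> = 0\<close> by (auto simp: periodic_ext_def)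
      next
        case False
        then have "frac u = u + 1" using u by (intro frac_neg_small) auto
        moreover have "norm (\<gamma> (u+1) - \<gamma> 1 - of_real ((u+1) - 1) * g' 1) \<le> \<kappa> * \<bar>(u+1) - 1\<bar>"
          using d1[rule_format, of "u+1"] u False by auto
        ultimately show ?thesis using \<open>\<tau> = 0\<close> g01 c01 by (simp add: periodic_ext_def)
      qed
    qed
  qed
qed

locale xing =
  fixes \<gamma> :: "real \<Rightarrow> complex" and g' :: "real \<Rightarrow> complex" and t t' :: real
  assumes deriv: "\<forall>s\<in>{0..1}. (\<gamma> has_vector_derivative g' s) (at s within {0..1})"
    and g01: "g' 0 = g' 1" and c01: "\<gamma> 0 = \<gamma> 1"
    and t0: "0 \<le> t" and tt': "t < t'" and t'1: "t' < 1" and eqv: "\<gamma> t = \<gamma> t'"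
    and pre: "\<And>s. s \<in> {0..<1} \<Longrightarrow> \<gamma> s = \<gamma> t \<Longrightarrow> s = t \<or> s = t'"
    and Dnz: "Im (cnj (g' t) * g' t') \<noteq> 0"
begin

abbreviation "al z \<equiv> cA (g' t) (g' t') (z - \<gamma> t)"
abbreviation "be z \<equiv> cB (g' t) (g' t') (z - \<gamma> t)"
abbreviation "G \<equiv> periodic_ext \<gamma>"

lemma contg: "continuous_on {0..1} \<gamma>"
proof -
  have "\<forall>s\<in>{0..1}. continuous (at s within {0..1}) \<gamma>"
    using deriv by (meson has_vector_derivative_continuous)
  then show ?thesis by (simp add: continuous_on_eq_continuous_within)
qed

lemma pathg: "path \<gamma>" using contg by (simp add: path_def)

lemma norm_le_coords: "norm (z - \<gamma> t) \<le> \<bar>al z\<bar> * norm (g' t) + \<bar>be z\<bar> * norm (g' t')"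
  by (rule c_norm_bound[OF Dnz])

lemma strands:
  assumes "h0 > 0"
  shows "\<exists>h>0. h < h0 \<and> (\<forall>u. \<bar>u\<bar> < h \<longrightarrow>
     \<bar>al (G (t+u)) - u\<bar> \<le> \<bar>u\<bar>/5 \<and> \<bar>be (G (t+u))\<bar> \<le> \<bar>u\<bar>/5 \<and>
     \<bar>be (G (t'+u)) - u\<bar> \<le> \<bar>u\<bar>/5 \<and> \<bar>al (G (t'+u))\<bar> \<le> \<bar>u\<bar>/5)"
proof -
  define D where "D = \<bar>Im (cnj (g' t) * g' t')\<bar>"
  have D0: "D > 0" using Dnz by (simp add: D_def)
  define K where "K = norm (g' t) + norm (g' t') + 1"
  have K0: "K > 0" by (simp add: K_def add_nonneg_pos)
  define \<kappa> where "\<kappa> = D / (5 * K)"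
  have k0: "\<kappa> > 0" using D0 K0 by (simp add: \<kappa>_def)
  obtain h1 where h10: "h1 > 0" and h1: "\<forall>u. \<bar>u\<bar> < h1 \<longrightarrow> norm (G (t+u) - \<gamma> t - of_real u * g' t) \<le> \<kappa> * \<bar>u\<bar>"
    using approx_deriv[OF deriv g01 c01 t0 _ k0] tt' t'1 by auto
  obtain h2 where h20: "h2 > 0" and h2: "\<forall>u. \<bar>u\<bar> < h2 \<longrightarrow> norm (G (t'+u) - \<gamma> t' - of_real u * g' t') \<le> \<kappa> * \<bar>u\<bar>"
    using approx_deriv[OF deriv g01 c01 _ t'1 k0] tt' t0 by auto
  have bnd: "\<bar>cA (g' t) (g' t') e\<bar> \<le> \<bar>u\<bar>/5 \<and> \<bar>cB (g' t) (g' t') e\<bar> \<le> \<bar>u\<bar>/5" if "norm e \<le> \<kappa> * \<bar>u\<bar>" for e u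
  proof -
    have "\<bar>cA (g' t) (g' t') e\<bar> \<le> norm (g' t') * norm e / D"
      using cA_bound[OF Dnz] by (simp add: D_def)
    also have "\<dots> \<le> K * (\<kappa> * \<bar>u\<bar>) / D"
      using that D0 by (intro divide_right_mono mult_mono) (auto simp: K_def)
    also have "\<dots> = \<bar>u\<bar>/5" using D0 K0 by (simp add: \<kappa>_def field_simps)
    finally have 1: "\<bar>cA (g' t) (g' t') e\<bar> \<le> \<bar>u\<bar>/5" .
    have "\<bar>cB (g' t) (g' t') e\<bar> \<le> norm (g' t) * norm e / D"
      using cB_bound[OF Dnz] by (simp add: D_def)
    also have "\<dots> \<le> K * (\<kappa> * \<bar>u\<bar>) / D"
      using that D0 by (intro divide_right_mono mult_mono) (auto simp: K_def)
    also have "\<dots> = \<bar>u\<bar>/5" using D0 K0 by (simp add: \<kappa>_def field_simps)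
    finally show ?thesis using 1 by simp
  qed
  show ?thesis
  proof (intro exI[of _ "min (h0/2) (min h1 h2)"] conjI)
    show "0 < min (h0/2) (min h1 h2)" using h10 h20 assms by auto
    show "min (h0/2) (min h1 h2) < h0" using assms by auto
    show "\<forall>u. \<bar>u\<bar> < min (h0/2) (min h1 h2) \<longrightarrow>
     \<bar>al (G (t+u)) - u\<bar> \<le> \<bar>u\<bar>/5 \<and> \<bar>be (G (t+u))\<bar> \<le> \<bar>u\<bar>/5 \<and>
     \<bar>be (G (t'+u)) - u\<bar> \<le> \<bar>u\<bar>/5 \<and> \<bar>al (G (t'+u))\<bar> \<le> \<bar>u\<bar>/5"
    proof (intro allI impI)
    fix u :: real assume u: "\<bar>u\<bar> < min (h0/2) (min h1 h2)"
    define e1 where "e1 = G (t+u) - \<gamma> t - of_real u * g' t"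
    define e2 where "e2 = G (t'+u) - \<gamma> t' - of_real u * g' t'"
    have n1: "norm e1 \<le> \<kappa> * \<bar>u\<bar>" using h1 u by (simp add: e1_def)
    have n2: "norm e2 \<le> \<kappa> * \<bar>u\<bar>" using h2 u by (simp add: e2_def)
    have E1: "G (t+u) - \<gamma> t = of_real u * g' t + e1" by (simp add: e1_def)
    have E2: "G (t'+u) - \<gamma> t = of_real u * g' t' + e2" by (simp add: e2_def eqv)
    have "al (G (t+u)) = u + cA (g' t) (g' t') e1"
      unfolding E1 cA_add cA_scale cA_a[OF Dnz] by simp
    moreover have "be (G (t+u)) = cB (g' t) (g' t') e1"
      unfolding E1 cB_add cB_scale cB_a by simp
    moreover have "be (G (t'+u)) = u + cB (g' t) (g' t') e2"
      unfolding E2 cB_add cB_scale cB_b[OF Dnz] by simp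
    moreover have "al (G (t'+u)) = cA (g' t) (g' t') e2"
      unfolding E2 cA_add cA_scale cA_b by simp
    ultimately show "\<bar>al (G (t+u)) - u\<bar> \<le> \<bar>u\<bar>/5 \<and> \<bar>be (G (t+u))\<bar> \<le> \<bar>u\<bar>/5 \<and>
     \<bar>be (G (t'+u)) - u\<bar> \<le> \<bar>u\<bar>/5 \<and> \<bar>al (G (t'+u))\<bar> \<le> \<bar>u\<bar>/5"
      using bnd[OF n1] bnd[OF n2] by simp
  qed
  qed
qed

lemma near_exists:
  assumes "h > 0"
  shows "\<exists>r0>0. \<forall>s\<in>{0..1}. norm (\<gamma> s - \<gamma> t) < r0 \<longrightarrow> \<bar>s - t\<bar> < h \<or> \<bar>s - t'\<bar> < h \<or> (t = 0 \<and> \<bar>s - 1\<bar> < h)"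
proof -
  define K where "K = {s\<in>{0..1}. h \<le> \<bar>s - t\<bar> \<and> h \<le> \<bar>s - t'\<bar> \<and> (t = 0 \<longrightarrow> h \<le> \<bar>s - 1\<bar>)}"
  have "K = {0..1} \<inter> {s. h \<le> \<bar>s - t\<bar>} \<inter> {s. h \<le> \<bar>s - t'\<bar>} \<inter> {s. t = 0 \<longrightarrow> h \<le> \<bar>s - 1\<bar>}"
    by (auto simp: K_def)
  moreover have "closed {s::real. h \<le> \<bar>s - t\<bar>}" "closed {s::real. h \<le> \<bar>s - t'\<bar>}"
    by (intro closed_Collect_le continuous_intros)+
  moreover have "closed {s::real. t = 0 \<longrightarrow> h \<le> \<bar>s - 1\<bar>}"
  proof (cases "t = 0")
    case True then show ?thesis by simp (intro closed_Collect_le continuous_intros)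
  qed simp
  ultimately have "closed K" by (auto intro!: closed_Int)
  moreover have "bounded K" by (rule bounded_subset[of "{0..1}"]) (auto simp: K_def)
  ultimately have "compact K" by (simp add: compact_eq_bounded_closed)
  moreover have "continuous_on K \<gamma>" by (rule continuous_on_subset[OF contg]) (auto simp: K_def)
  ultimately have "compact (\<gamma> ` K)" using compact_continuous_image by blast
  then have cl: "closed (\<gamma> ` K)" by (rule compact_imp_closed)
  have nin: "\<gamma> t \<notin> \<gamma> ` K"
  proof
    assume "\<gamma> t \<in> \<gamma> ` K"
    then obtain s where s: "s \<in> K" "\<gamma> s = \<gamma> t" by auto
    show False
    proof (cases "s = 1")
      case True
      then have "\<gamma> 0 = \<gamma> t" using s c01 by simp
      then have "0 = t \<or> 0 = t'" using pre[of 0] by auto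
      then have "t = 0" using t0 tt' by auto
      then show False using s True assms by (auto simp: K_def)
    next
      case False
      then have "s \<in> {0..<1}" using s by (auto simp: K_def)
      then have "s = t \<or> s = t'" using pre s by auto
      then show False using s assms by (auto simp: K_def)
    qed
  qed
  obtain d where d0: "d > 0" and d: "\<forall>x\<in>\<gamma> ` K. d \<le> dist (\<gamma> t) x"
    using separate_point_closed[OF cl nin] by blast
  show ?thesis
  proof (intro exI[of _ d] conjI ballI impI)
    fix s assume s: "s \<in> {0..1}" "norm (\<gamma> s - \<gamma> t) < d"
    show "\<bar>s - t\<bar> < h \<or> \<bar>s - t'\<bar> < h \<or> (t = 0 \<and> \<bar>s - 1\<bar> < h)"
    proof (rule ccontr)
      assume "\<not> ?thesis"
      then have "s \<in> K" using s by (auto simp: K_def)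
      then have "d \<le> dist (\<gamma> t) (\<gamma> s)" using d by auto
      then show False using s by (simp add: dist_norm norm_minus_commute)
    qed
  qed (use d0 in auto)
qed

end

locale xing2 = xing +
  fixes h r0 :: real
  assumes h0: "h > 0" and r00: "r0 > 0" and hs1: "h < (t' - t)/2" and hs2: "h < 1 - t'"
   and strand: "\<And>u. \<bar>u\<bar> < h \<Longrightarrow> \<bar>al (G (t+u)) - u\<bar> \<le> \<bar>u\<bar>/5 \<and> \<bar>be (G (t+u))\<bar> \<le> \<bar>u\<bar>/5 \<and>
     \<bar>be (G (t'+u)) - u\<bar> \<le> \<bar>u\<bar>/5 \<and> \<bar>al (G (t'+u))\<bar> \<le> \<bar>u\<bar>/5"
   and near: "\<And>s. s \<in> {0..1} \<Longrightarrow> norm (\<gamma> s - \<gamma> t) < r0 \<Longrightarrow> \<bar>s - t\<bar> < h \<or> \<bar>s - t'\<bar> < h \<or> (t = 0 \<and> \<bar>s - 1\<bar> < h)"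

lemma (in xing) ex_xing2: "\<exists>h r0. xing2 \<gamma> g' t t' h r0"
proof -
  obtain h where h: "h > 0" "h < min ((t' - t)/2) (1 - t')" and
    st: "\<forall>u. \<bar>u\<bar> < h \<longrightarrow> \<bar>al (G (t+u)) - u\<bar> \<le> \<bar>u\<bar>/5 \<and> \<bar>be (G (t+u))\<bar> \<le> \<bar>u\<bar>/5 \<and>
     \<bar>be (G (t'+u)) - u\<bar> \<le> \<bar>u\<bar>/5 \<and> \<bar>al (G (t'+u))\<bar> \<le> \<bar>u\<bar>/5"
    using strands[of "min ((t' - t)/2) (1 - t')"] tt' t'1 by auto
  obtain r0 where r0: "r0 > 0" and nr: "\<forall>s\<in>{0..1}. norm (\<gamma> s - \<gamma> t) < r0 \<longrightarrow> \<bar>s - t\<bar> < h \<or> \<bar>s - t'\<bar> < h \<or> (t = 0 \<and> \<bar>s - 1\<bar> < h)"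
    using near_exists[OF h(1)] by blast
  have "xing2 \<gamma> g' t t' h r0"
    by (unfold_locales) (use h r0 st nr in auto)
  then show ?thesis by blast
qed

context xing2 begin

lemma Gid: "0 \<le> s \<Longrightarrow> s < 1 \<Longrightarrow> G s = \<gamma> s"
  by (simp add: periodic_ext_def frac_eq)
lemma Gt: "0 \<le> t + u \<Longrightarrow> t + u < 1 \<Longrightarrow> G (t+u) = \<gamma> (t+u)"
  by (simp add: periodic_ext_def frac_eq)
lemma Gt': "0 \<le> t' + u \<Longrightarrow> t' + u < 1 \<Longrightarrow> G (t'+u) = \<gamma> (t'+u)"
  by (simp add: periodic_ext_def frac_eq)
lemma Gneg: "-1 < u \<Longrightarrow> u < 0 \<Longrightarrow> G u = \<gamma> (1+u)"
  by (simp add: periodic_ext_def frac_neg_small add.commute)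

lemma strandA_pos: "0 \<le> u \<Longrightarrow> u < h \<Longrightarrow> al (G (t+u)) \<ge> 4*u/5 \<and> al (G (t+u)) \<le> 6*u/5 \<and> \<bar>be (G (t+u))\<bar> \<le> u/5"
  using strand[of u] by arith
lemma strandA_neg:
  assumes "0 \<le> d" "d < h" shows "al (G (t-d)) \<le> -4*d/5 \<and> al (G (t-d)) \<ge> -6*d/5 \<and> \<bar>be (G (t-d))\<bar> \<le> d/5"
proof -
  have "\<bar>-d\<bar> < h" using assms by simp
  from strand[OF this] have "\<bar>al (G (t - d)) + d\<bar> \<le> d/5" "\<bar>be (G (t-d))\<bar> \<le> d/5" using assms by simp_all
  then show ?thesis by arith
qed
lemma strandB_pos: "0 \<le> u \<Longrightarrow> u < h \<Longrightarrow> be (G (t'+u)) \<ge> 4*u/5 \<and> be (G (t'+u)) \<le> 6*u/5 \<and> \<bar>al (G (t'+u))\<bar> \<le> u/5"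
  using strand[of u] by arith
lemma strandB_neg:
  assumes "0 \<le> d" "d < h" shows "be (G (t'-d)) \<le> -4*d/5 \<and> be (G (t'-d)) \<ge> -6*d/5 \<and> \<bar>al (G (t'-d))\<bar> \<le> d/5"
proof -
  have "\<bar>-d\<bar> < h" using assms by simp
  from strand[OF this] have "\<bar>be (G (t' - d)) + d\<bar> \<le> d/5" "\<bar>al (G (t'-d))\<bar> \<le> d/5" using assms by simp_all
  then show ?thesis by arith
qed

lemma Lnear:
  assumes "w \<in> \<gamma> ` {t..t'}" "norm (w - \<gamma> t) < r0"
  shows "(al w \<ge> 0 \<and> \<bar>be w\<bar> \<le> al w / 4) \<or> (be w \<le> 0 \<and> \<bar>al w\<bar> \<le> - be w / 4)"
proof -
  obtain s where s: "s \<in> {t..t'}" "w = \<gamma> s" using assms by auto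
  have s01: "s \<in> {0..1}" using s t0 t'1 by auto
  consider "\<bar>s - t\<bar> < h" | "\<bar>s - t'\<bar> < h" | "t = 0 \<and> \<bar>s - 1\<bar> < h"
    using near[OF s01] assms(2) s by auto
  then show ?thesis
  proof cases
    case 1
    define u where "u = s - t"
    have u: "0 \<le> u" "u < h" using 1 s by (auto simp: u_def)
    have "G (t+u) = w" using s t'1 t0 by (simp add: u_def Gid)
    then show ?thesis using strandA_pos[OF u] by auto
  next
    case 2
    define d where "d = t' - s"
    have d: "0 \<le> d" "d < h" using 2 s by (auto simp: d_def)
    have "G (t'-d) = w" using s t0 t'1 Gt'[of "-d"] by (simp add: d_def)
    then show ?thesis using strandB_neg[OF d] by auto
  next
    case 3
    then show ?thesis using s hs2 by auto
  qed
qed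

lemma Gnear:
  assumes "w \<in> \<gamma> ` {0..1}" "norm (w - \<gamma> t) < r0"
  shows "\<bar>be w\<bar> \<le> \<bar>al w\<bar> / 4 \<or> \<bar>al w\<bar> \<le> \<bar>be w\<bar> / 4"
proof -
  obtain s where s: "s \<in> {0..1}" "w = \<gamma> s" using assms by auto
  consider "\<bar>s - t\<bar> < h" | "\<bar>s - t'\<bar> < h" | "t = 0 \<and> \<bar>s - 1\<bar> < h"
    using near[OF s(1)] assms(2) s by auto
  then show ?thesis
  proof cases
    case 1
    show ?thesis
    proof (cases "s \<ge> t")
      case True
      define u where "u = s - t"
      have u: "0 \<le> u" "u < h" using 1 True by (auto simp: u_def)
      have "s < 1" using 1 hs1 hs2 by auto
      then have "G (t+u) = w" using s True by (simp add: u_def Gid)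
      then show ?thesis using strandA_pos[OF u] by auto
    next
      case False
      define d where "d = t - s"
      have d: "0 \<le> d" "d < h" using 1 False by (auto simp: d_def)
      have "G (t-d) = w" using s False Gt[of "-d"] t0 tt' t'1 by (simp add: d_def)
      then show ?thesis using strandA_neg[OF d] by auto
    qed
  next
    case 2
    show ?thesis
    proof (cases "s \<ge> t'")
      case True
      define u where "u = s - t'"
      have u: "0 \<le> u" "u < h" using 2 True by (auto simp: u_def)
      have "s < 1" using 2 hs2 by auto
      then have "G (t'+u) = w" using s True by (simp add: u_def Gid)
      then show ?thesis using strandB_pos[OF u] by auto
    next
      case False
      define d where "d = t' - s"
      have d: "0 \<le> d" "d < h" using 2 False by (auto simp: d_def)
      have "G (t'-d) = w" using s False t'1 by (simp add: d_def Gid)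
      then show ?thesis using strandB_neg[OF d] by auto
    qed
  next
    case 3
    define d where "d = 1 - s"
    have d: "0 \<le> d" "d < h" using 3 s by (auto simp: d_def)
    have "G (t-d) = w"
    proof (cases "d = 0")
      case True
      then show ?thesis using 3 s c01 by (simp add: d_def periodic_ext_def)
    next
      case False
      then show ?thesis using 3 d s Gneg[of "-d"] hs1 hs2 by (simp add: d_def)
    qed
    then show ?thesis using strandA_neg[OF d] by auto
  qed
qed

lemma Mnear:
  assumes "t = 0" "0 < hh" "hh < h" "w \<in> \<gamma> ` {t'..1-hh}" "norm (w - \<gamma> t) < r0"
  shows "(be w \<ge> 0 \<and> \<bar>al w\<bar> \<le> be w / 4) \<or> (al w \<le> -4*hh/5 \<and> \<bar>be w\<bar> \<le> - al w / 4)"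
proof -
  obtain s where s: "s \<in> {t'..1-hh}" "w = \<gamma> s" using assms by auto
  have s01: "s \<in> {0..1}" using s t0 tt' assms by auto
  consider "\<bar>s - t\<bar> < h" | "\<bar>s - t'\<bar> < h" | "t = 0 \<and> \<bar>s - 1\<bar> < h"
    using near[OF s01] assms(5) s by auto
  then show ?thesis
  proof cases
    case 1
    then show ?thesis using s hs1 assms by auto
  next
    case 2
    define u where "u = s - t'"
    have u: "0 \<le> u" "u < h" using 2 s by (auto simp: u_def)
    have "s < 1" using s assms by auto
    then have "G (t'+u) = w" using s t0 tt' by (simp add: u_def Gid)
    then show ?thesis using strandB_pos[OF u] by auto
  next
    case 3
    define d where "d = 1 - s"
    have d: "hh \<le> d" "d < h" using 3 s by (auto simp: d_def)
    have "G (t-d) = w" using 3 d s Gneg[of "-d"] assms hs1 hs2 by (simp add: d_def)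
    then show ?thesis using strandA_neg[of d] d assms by auto
  qed
qed

end

context xing begin

lemma al_comb: "al ((1-\<mu>) *\<^sub>R x + \<mu> *\<^sub>R y) = (1-\<mu>) * al x + \<mu> * al y"
proof -
  have "(1-\<mu>) *\<^sub>R x + \<mu> *\<^sub>R y - \<gamma> t = (1-\<mu>) *\<^sub>R (x - \<gamma> t) + \<mu> *\<^sub>R (y - \<gamma> t)"
    by (simp add: algebra_simps)
  then show ?thesis by (simp add: cA_add cA_scaleR)
qed
lemma be_comb: "be ((1-\<mu>) *\<^sub>R x + \<mu> *\<^sub>R y) = (1-\<mu>) * be x + \<mu> * be y"
proof -
  have "(1-\<mu>) *\<^sub>R x + \<mu> *\<^sub>R y - \<gamma> t = (1-\<mu>) *\<^sub>R (x - \<gamma> t) + \<mu> *\<^sub>R (y - \<gamma> t)"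
    by (simp add: algebra_simps)
  then show ?thesis by (simp add: cB_add cB_scaleR)
qed
lemma al_plus_b: "al (x + of_real c * g' t') = al x"
proof -
  have e: "x + of_real c * g' t' - \<gamma> t = (x - \<gamma> t) + of_real c * g' t'" by simp
  show ?thesis by (simp only: e cA_add cA_scale cA_b)
qed
lemma be_plus_b: "be (x + of_real c * g' t') = be x + c"
proof -
  have e: "x + of_real c * g' t' - \<gamma> t = (x - \<gamma> t) + of_real c * g' t'" by simp
  show ?thesis by (simp only: e cB_add cB_scale cB_b[OF Dnz])
qed
lemma al_minus_a: "al (x - of_real c * g' t) = al x - c"
proof -
  have e: "x - of_real c * g' t - \<gamma> t = (x - \<gamma> t) - of_real c * g' t" by simp
  show ?thesis by (simp only: e cA_diff cA_scale cA_a[OF Dnz])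
qed
lemma be_minus_a: "be (x - of_real c * g' t) = be x"
proof -
  have e: "x - of_real c * g' t - \<gamma> t = (x - \<gamma> t) - of_real c * g' t" by simp
  show ?thesis by (simp only: e cB_diff cB_scale cB_a)
qed

lemma seg_param: "w \<in> closed_segment x y \<Longrightarrow> \<exists>\<mu>. 0 \<le> \<mu> \<and> \<mu> \<le> 1 \<and> w = (1-\<mu>) *\<^sub>R x + \<mu> *\<^sub>R y"
  by (auto simp: closed_segment_def)

lemma norm_bound2:
  assumes "\<bar>al w\<bar> \<le> A" "\<bar>be w\<bar> \<le> B"
  shows "norm (w - \<gamma> t) \<le> A * norm (g' t) + B * norm (g' t')"
proof -
  have "norm (w - \<gamma> t) \<le> \<bar>al w\<bar> * norm (g' t) + \<bar>be w\<bar> * norm (g' t')" by (rule norm_le_coords)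
  also have "\<dots> \<le> A * norm (g' t) + B * norm (g' t')"
    using assms by (intro add_mono mult_right_mono) auto
  finally show ?thesis .
qed

end

context xing2 begin

definition "Rg = {w. al w < 0 \<and> be w > 0 \<and> norm (w - \<gamma> t) < r0}"

lemma convex_Rg: "convex Rg"
  unfolding convex_alt
proof (intro ballI allI impI)
  fix x y and \<mu> :: real assume x: "x \<in> Rg" and y: "y \<in> Rg" and mu: "0 \<le> \<mu> \<and> \<mu> \<le> 1"
  have a1: "(1-\<mu>) * al x \<le> 0" "\<mu> * al y \<le> 0" using x y mu by (auto simp: Rg_def mult_nonneg_nonpos)
  have "(1-\<mu>) * al x < 0 \<or> \<mu> * al y < 0" using x y mu
    by (cases "\<mu> = 0") (auto simp: Rg_def mult_pos_neg)
  then have "(1-\<mu>) * al x + \<mu> * al y < 0" using a1 by (elim disjE; linarith)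
  then have A: "al ((1-\<mu>) *\<^sub>R x + \<mu> *\<^sub>R y) < 0" by (simp add: al_comb)
  have b1: "(1-\<mu>) * be x \<ge> 0" "\<mu> * be y \<ge> 0" using x y mu by (auto simp: Rg_def)
  have "(1-\<mu>) * be x > 0 \<or> \<mu> * be y > 0" using x y mu
    by (cases "\<mu> = 0") (auto simp: Rg_def)
  then have "(1-\<mu>) * be x + \<mu> * be y > 0" using b1 by (elim disjE; linarith)
  then have B: "be ((1-\<mu>) *\<^sub>R x + \<mu> *\<^sub>R y) > 0" by (simp add: be_comb)
  have "(1-\<mu>) *\<^sub>R x + \<mu> *\<^sub>R y \<in> ball (\<gamma> t) r0"
    using convex_ball[of "\<gamma> t" r0] x y mu unfolding convex_alt
    by (auto simp: Rg_def dist_norm norm_minus_commute)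
  then show "(1-\<mu>) *\<^sub>R x + \<mu> *\<^sub>R y \<in> Rg" using A B
    by (simp add: Rg_def dist_norm norm_minus_commute)
qed

lemma Rg_avoid: "Rg \<inter> \<gamma> ` {t..t'} = {}"
proof -
  have False if "w \<in> Rg" "w \<in> \<gamma> ` {t..t'}" for w
    using Lnear[OF that(2)] that(1) by (auto simp: Rg_def)
  then show ?thesis by blast
qed

lemma conn_Rg: "x \<in> Rg \<Longrightarrow> y \<in> Rg \<Longrightarrow> connected_component (- (\<gamma> ` {t..t'})) x y"
  by (rule connected_componentI[OF convex_connected[OF convex_Rg]]) (use Rg_avoid in auto)

abbreviation "NAB \<equiv> norm (g' t) + norm (g' t')"

lemma D_conn:
  assumes d: "0 < \<delta>" "\<delta> < h" and dr: "\<delta> * (11/5) * NAB < r0" and z: "z \<in> Rg"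
  shows "connected_component (- (\<gamma> ` {t..t'})) z (G (t-\<delta>))"
    and "connected_component (- (\<gamma> ` {t..t'})) z (G (t'+\<delta>))"
proof -
  define p where "p = G (t-\<delta>)"
  define q where "q = G (t'+\<delta>)"
  have P: "al p \<le> -4*\<delta>/5" "al p \<ge> -6*\<delta>/5" "\<bar>be p\<bar> \<le> \<delta>/5"
    using strandA_neg[of \<delta>] d by (auto simp: p_def)
  have Q: "be q \<ge> 4*\<delta>/5" "be q \<le> 6*\<delta>/5" "\<bar>al q\<bar> \<le> \<delta>/5"
    using strandB_pos[of \<delta>] d by (auto simp: q_def)
  have na: "norm (g' t) \<ge> 0" "norm (g' t') \<ge> 0" by auto
  define c2 where "c2 = 2*\<delta>"
  define p1 where "p1 = p + of_real c2 * g' t'"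
  define q1 where "q1 = q - of_real c2 * g' t"
  have bound: "norm (w - \<gamma> t) < r0" if "\<bar>al w\<bar> \<le> 11*\<delta>/5" "\<bar>be w\<bar> \<le> 11*\<delta>/5" for w
  proof -
    have "norm (w - \<gamma> t) \<le> (11*\<delta>/5) * norm (g' t) + (11*\<delta>/5) * norm (g' t')"
      by (rule norm_bound2[OF that])
    also have "\<dots> = \<delta> * (11/5) * NAB" by (simp add: algebra_simps)
    finally show ?thesis using dr by simp
  qed
  have p1c: "al p1 = al p" "be p1 = be p + c2" by (simp_all add: p1_def al_plus_b be_plus_b)
  have q1c: "al q1 = al q - c2" "be q1 = be q" by (simp_all add: q1_def al_minus_a be_minus_a)
  have p1R: "p1 \<in> Rg"
  proof -
    from p1c show ?thesis unfolding Rg_def using P d bound[of p1] by (auto simp: c2_def)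
  qed
  have q1R: "q1 \<in> Rg"
  proof -
    from q1c show ?thesis unfolding Rg_def using Q d bound[of q1] by (auto simp: c2_def)
  qed
  have segp: "closed_segment p p1 \<subseteq> - (\<gamma> ` {t..t'})"
  proof
    fix w assume "w \<in> closed_segment p p1"
    then obtain \<mu> where mu: "0 \<le> \<mu>" "\<mu> \<le> 1" "w = (1-\<mu>) *\<^sub>R p + \<mu> *\<^sub>R p1"
      using seg_param by blast
    have m1: "0 \<le> \<mu> * \<delta>" "\<mu> * \<delta> \<le> \<delta>" using mu d by (auto simp: mult_left_le_one_le)
    have A: "al w = al p" unfolding mu(3) al_comb p1c by (simp add: algebra_simps)
    have B: "be w = be p + 2 * (\<mu> * \<delta>)" unfolding mu(3) be_comb p1c by (simp add: algebra_simps c2_def)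
    have "\<bar>al w\<bar> \<le> 11*\<delta>/5" using A P d by arith
    moreover have "\<bar>be w\<bar> \<le> 11*\<delta>/5" using B P m1 d by arith
    ultimately have nw: "norm (w - \<gamma> t) < r0" by (rule bound)
    show "w \<in> - (\<gamma> ` {t..t'})"
    proof
      assume "w \<in> \<gamma> ` {t..t'}"
      from Lnear[OF this nw] show False using A B P m1 d by arith
    qed
  qed
  have segq: "closed_segment q q1 \<subseteq> - (\<gamma> ` {t..t'})"
  proof
    fix w assume "w \<in> closed_segment q q1"
    then obtain \<mu> where mu: "0 \<le> \<mu>" "\<mu> \<le> 1" "w = (1-\<mu>) *\<^sub>R q + \<mu> *\<^sub>R q1"
      using seg_param by blast
    have m1: "0 \<le> \<mu> * \<delta>" "\<mu> * \<delta> \<le> \<delta>" using mu d by (auto simp: mult_left_le_one_le)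
    have A: "al w = al q - 2 * (\<mu> * \<delta>)" unfolding mu(3) al_comb q1c by (simp add: algebra_simps c2_def)
    have B: "be w = be q" unfolding mu(3) be_comb q1c by (simp add: algebra_simps)
    have "\<bar>al w\<bar> \<le> 11*\<delta>/5" using A Q m1 d by arith
    moreover have "\<bar>be w\<bar> \<le> 11*\<delta>/5" using B Q d by arith
    ultimately have nw: "norm (w - \<gamma> t) < r0" by (rule bound)
    show "w \<in> - (\<gamma> ` {t..t'})"
    proof
      assume "w \<in> \<gamma> ` {t..t'}"
      from Lnear[OF this nw] show False using A B Q m1 d by arith
    qed
  qed
  have "connected_component (- (\<gamma> ` {t..t'})) p1 p"
    by (rule connected_componentI[OF connected_segment segp]) auto
  then show "connected_component (- (\<gamma> ` {t..t'})) z (G (t-\<delta>))"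
    using conn_Rg[OF z p1R] connected_component_trans unfolding p_def by blast
  have "connected_component (- (\<gamma> ` {t..t'})) q1 q"
    by (rule connected_componentI[OF connected_segment segq]) auto
  then show "connected_component (- (\<gamma> ` {t..t'})) z (G (t'+\<delta>))"
    using conn_Rg[OF z q1R] connected_component_trans unfolding q_def by blast
qed

end

context xing2 begin

definition "pt x y = \<gamma> t + of_real x * g' t + of_real y * g' t'"

lemma al_pt[simp]: "al (pt x y) = x"
proof -
  have e: "pt x y - \<gamma> t = of_real x * g' t + of_real y * g' t'" by (simp add: pt_def)
  show ?thesis by (simp only: e cA_add cA_scale cA_a[OF Dnz] cA_b)
qed
lemma be_pt[simp]: "be (pt x y) = y"
proof -
  have e: "pt x y - \<gamma> t = of_real x * g' t + of_real y * g' t'" by (simp add: pt_def)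
  show ?thesis by (simp only: e cB_add cB_scale cB_b[OF Dnz] cB_a)
qed
lemma pt_comb: "(1-\<mu>) *\<^sub>R pt x1 y1 + \<mu> *\<^sub>R pt x2 y2 = pt ((1-\<mu>)*x1 + \<mu>*x2) ((1-\<mu>)*y1 + \<mu>*y2)"
  by (simp add: pt_def scaleR_conv_of_real algebra_simps)
lemma pt00[simp]: "pt 0 0 = \<gamma> t" by (simp add: pt_def)

lemma norm_pt: "norm (pt x y - \<gamma> t) \<le> \<bar>x\<bar> * norm (g' t) + \<bar>y\<bar> * norm (g' t')"
  using norm_bound2[of "pt x y" "\<bar>x\<bar>" "\<bar>y\<bar>"] by simp

lemma diag_notin:
  assumes "norm (w - \<gamma> t) < r0" "\<bar>al w\<bar> = \<bar>be w\<bar>" "al w \<noteq> 0"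
  shows "w \<notin> \<gamma> ` {0..1}"
proof
  assume "w \<in> \<gamma> ` {0..1}"
  from Gnear[OF this assms(1)] show False using assms by auto
qed

definition "ConeA = {w. al w \<le> 0 \<and> \<bar>be w\<bar> \<le> - al w / 4}"

lemma convex_ConeA: "convex ConeA"
  unfolding convex_alt
proof (intro ballI allI impI)
  fix x y and \<mu> :: real assume x: "x \<in> ConeA" and y: "y \<in> ConeA" and mu: "0 \<le> \<mu> \<and> \<mu> \<le> 1"
  have m: "0 \<le> 1 - \<mu>" "0 \<le> \<mu>" using mu by auto
  have A: "(1-\<mu>) * al x \<le> 0" "\<mu> * al y \<le> 0" using x y m by (auto simp: ConeA_def mult_nonneg_nonpos)
  have "\<bar>(1-\<mu>) * be x + \<mu> * be y\<bar> \<le> \<bar>(1-\<mu>) * be x\<bar> + \<bar>\<mu> * be y\<bar>" by (rule abs_triangle_ineq)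
  also have "\<dots> = (1-\<mu>) * \<bar>be x\<bar> + \<mu> * \<bar>be y\<bar>" using m by (simp add: abs_mult)
  also have "\<dots> \<le> (1-\<mu>) * (- al x / 4) + \<mu> * (- al y / 4)"
    using x y m by (intro add_mono mult_left_mono) (auto simp: ConeA_def)
  also have "(1-\<mu>) * (- al x / 4) + \<mu> * (- al y / 4) = - ((1-\<mu>) * al x + \<mu> * al y) / 4"
    by (simp add: field_simps)
  finally have B: "\<bar>(1-\<mu>) * be x + \<mu> * be y\<bar> \<le> - ((1-\<mu>) * al x + \<mu> * al y) / 4" .
  show "(1-\<mu>) *\<^sub>R x + \<mu> *\<^sub>R y \<in> ConeA"
    unfolding ConeA_def mem_Collect_eq al_comb be_comb using A B by linarith
qed

definition "Hpl c = {w. be w \<ge> c}"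
lemma convex_Hpl: "convex (Hpl c)"
  unfolding convex_alt
proof (intro ballI allI impI)
  fix x y and \<mu> :: real assume x: "x \<in> Hpl c" and y: "y \<in> Hpl c" and mu: "0 \<le> \<mu> \<and> \<mu> \<le> 1"
  have m: "0 \<le> 1 - \<mu>" "0 \<le> \<mu>" using mu by auto
  have "(1-\<mu>) * c + \<mu> * c \<le> (1-\<mu>) * be x + \<mu> * be y"
    using x y m by (intro add_mono mult_left_mono) (auto simp: Hpl_def)
  then show "(1-\<mu>) *\<^sub>R x + \<mu> *\<^sub>R y \<in> Hpl c"
    unfolding Hpl_def mem_Collect_eq be_comb by (simp add: algebra_simps)
qed

lemma cA_sub: "cA (g' t) (g' t') (x - y) = al x - al y"
proof -
  have "x - y = (x - \<gamma> t) - (y - \<gamma> t)" by simp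
  then show ?thesis by (metis cA_diff)
qed
lemma cB_sub: "cB (g' t) (g' t') (x - y) = be x - be y"
proof -
  have "x - y = (x - \<gamma> t) - (y - \<gamma> t)" by simp
  then show ?thesis by (metis cB_diff)
qed

lemma Im_edge: "Im ((B - A) * cnj (B - z)) = Im (cnj (g' t) * g' t') *
   ((be B - be A) * (al B - al z) - (al B - al A) * (be B - be z))"
  unfolding c_cross[OF Dnz, of "B - A" "B - z"] cA_sub[of B A] cA_sub[of B z] cB_sub[of B A] cB_sub[of B z] ..

lemma Im_edge_rev: "Im ((A - B) * cnj (A - z)) = - Im (cnj (g' t) * g' t') *
   ((be B - be A) * (al B - al z) - (al B - al A) * (be B - be z))"
proof -
  have "Im ((A - B) * cnj (A - z)) = Im (cnj (g' t) * g' t') *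
   ((be A - be B) * (al A - al z) - (al A - al B) * (be A - be z))"
    unfolding c_cross[OF Dnz, of "A - B" "A - z"] cA_sub[of A B] cA_sub[of A z] cB_sub[of A B] cB_sub[of A z] ..
  also have "(be A - be B) * (al A - al z) - (al A - al B) * (be A - be z) =
     - ((be B - be A) * (al B - al z) - (al B - al A) * (be B - be z))"
    by (simp add: algebra_simps)
  finally show ?thesis by (simp only: mult_minus_left mult_minus_right)
qed

lemma seg_Im0: "z \<in> closed_segment A B \<Longrightarrow> Im ((B - A) * cnj (B - z)) = 0"
proof -
  assume "z \<in> closed_segment A B"
  then obtain u where u: "z = (1 - u) *\<^sub>R A + u *\<^sub>R B" by (auto simp: closed_segment_def)
  then have "B - z = of_real (1 - u) * (B - A)" by (simp add: scaleR_conv_of_real algebra_simps)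
  then have "cnj (B - z) = of_real (1 - u) * cnj (B - A)" by simp
  then have "(B - A) * cnj (B - z) = of_real (1-u) * ((B - A) * cnj (B - A))" by (simp only: mult.left_commute)
  also have "(B - A) * cnj (B - A) = of_real ((norm (B - A))^2)" by (rule complex_norm_square[symmetric])
  finally show ?thesis by simp
qed

end

locale xing3 = xing2 +
  fixes hh :: real
  assumes t_0: "t = 0" and hh0: "0 < hh" and hhh: "hh < h"
    and hhr: "hh * (norm (g' t) + norm (g' t')) < r0"
begin

definition "z1 = pt (-(hh/2)) (-(hh/2))"
definition "z2 = pt (-(hh/2)) (hh/2)"
definition "PP = \<gamma> (1 - hh)"
definition "ZZ = pt 0 (2*hh)"

lemma hh1: "hh < 1 - t'" using hhh hs2 by simp

lemma PP_G: "PP = G (t - hh)"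
  using Gneg[of "-hh"] hh0 hh1 t_0 t'1 tt' by (simp add: PP_def)

lemma PP_c: "al PP \<le> -4*hh/5" "al PP \<ge> -6*hh/5" "\<bar>be PP\<bar> \<le> hh/5"
  using strandA_neg[of hh] hh0 hhh by (auto simp: PP_G)

lemma NAB0: "0 \<le> NAB" by simp

lemma small_norm: "\<bar>al w\<bar> \<le> hh/2 \<Longrightarrow> \<bar>be w\<bar> \<le> hh/2 \<Longrightarrow> norm (w - \<gamma> t) < r0"
proof -
  assume a: "\<bar>al w\<bar> \<le> hh/2" "\<bar>be w\<bar> \<le> hh/2"
  have "norm (w - \<gamma> t) \<le> hh/2 * norm (g' t) + hh/2 * norm (g' t')" by (rule norm_bound2[OF a])
  also have "\<dots> = hh/2 * NAB" by (simp add: algebra_simps)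
  also have "\<dots> \<le> hh * NAB" using hh0 by (intro mult_right_mono) auto
  finally show ?thesis using hhr by simp
qed

lemma S12_pts:
  assumes "w \<in> closed_segment z1 z2"
  shows "al w = -(hh/2)" "\<bar>be w\<bar> \<le> hh/2" "norm (w - \<gamma> t) < r0"
proof -
  obtain \<mu> where mu: "0 \<le> \<mu>" "\<mu> \<le> 1" "w = (1-\<mu>) *\<^sub>R z1 + \<mu> *\<^sub>R z2"
    using seg_param[OF assms] by blast
  have w: "w = pt ((1-\<mu>) * (-(hh/2)) + \<mu> * (-(hh/2))) ((1-\<mu>) * (-(hh/2)) + \<mu> * (hh/2))"
    unfolding mu(3) z1_def z2_def pt_comb ..
  show A: "al w = -(hh/2)" unfolding w by (simp add: algebra_simps)
  have "be w = \<mu> * hh - hh/2" unfolding w by (simp add: field_simps)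
  moreover have "0 \<le> \<mu> * hh" "\<mu> * hh \<le> hh" using mu hh0 by (auto simp: mult_left_le_one_le)
  ultimately show B: "\<bar>be w\<bar> \<le> hh/2" by arith
  show "norm (w - \<gamma> t) < r0" using A B hh0 by (intro small_norm) auto
qed

lemma S12_L: "closed_segment z1 z2 \<inter> \<gamma> ` {t..t'} = {}"
proof -
  have False if "w \<in> closed_segment z1 z2" "w \<in> \<gamma> ` {t..t'}" for w
    using Lnear[OF that(2) S12_pts(3)[OF that(1)]] S12_pts(1,2)[OF that(1)] hh0 by arith
  then show ?thesis by blast
qed

lemma S12_M: "closed_segment z1 z2 \<inter> \<gamma> ` {t'..1-hh} = {}"
proof -
  have False if "w \<in> closed_segment z1 z2" "w \<in> \<gamma> ` {t'..1-hh}" for w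
    using Mnear[OF t_0 hh0 hhh that(2) S12_pts(3)[OF that(1)]] S12_pts(1,2)[OF that(1)] hh0 by arith
  then show ?thesis by blast
qed

lemma S12_PZ: "closed_segment z1 z2 \<inter> closed_segment PP ZZ = {}"
proof -
  have False if w1: "w \<in> closed_segment z1 z2" and w2: "w \<in> closed_segment PP ZZ" for w
  proof -
    obtain \<mu> where mu: "0 \<le> \<mu>" "\<mu> \<le> 1" "w = (1-\<mu>) *\<^sub>R PP + \<mu> *\<^sub>R ZZ"
      using seg_param[OF w2] by blast
    define l where "l = 1 - \<mu>"
    have l: "0 \<le> l" "l \<le> 1" using mu by (auto simp: l_def)
    have A: "al w = l * al PP" unfolding mu(3) al_comb by (simp add: ZZ_def l_def)
    have B: "be w = l * be PP + (1 - l) * (2*hh)" unfolding mu(3) be_comb by (simp add: ZZ_def l_def)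
    have aw: "al w = -(hh/2)" "\<bar>be w\<bar> \<le> hh/2" using S12_pts[OF w1] by auto
    define X where "X = l * hh"
    have p1: "l * al PP \<ge> -6/5 * X" "l * al PP \<le> -4/5 * X"
    proof -
      have "l * al PP \<ge> l * (-6*hh/5)" "l * al PP \<le> l * (-4*hh/5)"
        using PP_c(1,2) l(1) by (intro mult_left_mono; simp)+
      then show "l * al PP \<ge> -6/5 * X" "l * al PP \<le> -4/5 * X" by (simp_all add: X_def algebra_simps)
    qed
    have p2: "l * be PP \<ge> -X/5"
    proof -
      have "l * be PP \<ge> l * (-hh/5)" using PP_c l by (intro mult_left_mono) auto
      then show ?thesis by (simp add: X_def algebra_simps)
    qed
    have B2: "be w = l * be PP + 2*hh - 2*X" using B by (simp add: X_def algebra_simps)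
    have "X \<le> 5*hh/8" using A aw(1) p1 by linarith
    then show False using B2 aw(2) p2 hh0 by linarith
  qed
  then show ?thesis by blast
qed

lemma S12_Zv: "closed_segment z1 z2 \<inter> closed_segment ZZ (\<gamma> t) = {}"
proof -
  have False if w1: "w \<in> closed_segment z1 z2" and w2: "w \<in> closed_segment ZZ (\<gamma> t)" for w
  proof -
    obtain \<mu> where mu: "0 \<le> \<mu>" "\<mu> \<le> 1" "w = (1-\<mu>) *\<^sub>R ZZ + \<mu> *\<^sub>R (\<gamma> t)"
      using seg_param[OF w2] by blast
    have "al w = 0" unfolding mu(3) al_comb by (simp add: ZZ_def)
    then show False using S12_pts(1)[OF w1] hh0 by simp
  qed
  then show ?thesis by blast
qed

lemma z_notin_cone: "z1 \<notin> ConeA" "z2 \<notin> ConeA"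
  using hh0 by (auto simp: ConeA_def z1_def z2_def)

lemma v_cone: "\<gamma> t \<in> ConeA" by (simp add: ConeA_def)
lemma PP_cone: "PP \<in> ConeA" using PP_c by (auto simp: ConeA_def)

lemma Mend_cone:
  assumes "\<tau> \<in> {0..1}"
  shows "subpath (1 - hh) 1 \<gamma> \<tau> \<in> ConeA"
proof -
  define d where "d = hh * (1 - \<tau>)"
  have d: "0 \<le> d" "d \<le> hh" using assms hh0 by (auto simp: d_def mult_left_le_one_le)
  have e: "subpath (1 - hh) 1 \<gamma> \<tau> = \<gamma> (1 - d)" by (simp add: subpath_def d_def algebra_simps)
  have "\<gamma> (1 - d) = G (t - d)"
  proof (cases "d = 0")
    case True then show ?thesis using c01 t_0 by (simp add: periodic_ext_def)
  next
    case False then show ?thesis using Gneg[of "-d"] d t_0 hh1 t'1 tt' by simp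
  qed
  then show ?thesis using strandA_neg[of d] d hhh by (auto simp: e ConeA_def)
qed

lemma chord_cone: "\<tau> \<in> {0..1} \<Longrightarrow> linepath PP (\<gamma> t) \<tau> \<in> ConeA"
proof -
  assume "\<tau> \<in> {0..1}"
  then have "linepath PP (\<gamma> t) \<tau> \<in> closed_segment PP (\<gamma> t)"
    by (metis path_image_linepath imageI path_image_def)
  then show ?thesis using closed_segment_subset[OF PP_cone v_cone convex_ConeA] by blast
qed

lemma z_notin_Mseg:
  assumes "\<tau> \<in> {0..1}" "z \<in> {z1, z2}"
  shows "z \<notin> closed_segment (subpath (1 - hh) 1 \<gamma> \<tau>) (linepath PP (\<gamma> t) \<tau>)"
  using closed_segment_subset[OF Mend_cone[OF assms(1)] chord_cone[OF assms(1)] convex_ConeA] z_notin_cone assms(2)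
  by blast

lemma z_notin_img: "z \<in> {z1, z2} \<Longrightarrow> z \<notin> path_image \<gamma>"
proof -
  assume z: "z \<in> {z1, z2}"
  have "\<bar>al z\<bar> = \<bar>be z\<bar>" "al z \<noteq> 0" "\<bar>al z\<bar> \<le> hh/2" "\<bar>be z\<bar> \<le> hh/2"
    using z hh0 by (auto simp: z1_def z2_def)
  then show ?thesis using diag_notin[of z] small_norm[of z] by (auto simp: path_image_def)
qed

end

context xing3 begin

abbreviation "Lp \<equiv> subpath t t' \<gamma>"
abbreviation "Mmid \<equiv> subpath t' (1-hh) \<gamma>"
abbreviation "Mend \<equiv> subpath (1-hh) 1 \<gamma>"
abbreviation "chord \<equiv> linepath PP (\<gamma> t)"
definition "Tri = linepath PP (\<gamma> t) +++ (linepath (\<gamma> t) ZZ +++ linepath ZZ PP)"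
definition "K3 = Mmid +++ (linepath PP ZZ +++ linepath ZZ (\<gamma> t))"

lemma prm: "t \<in> {0..1}" "t' \<in> {0..1}" "1 - hh \<in> {0..1}" "(1::real) \<in> {0..1}" "t' \<le> 1 - hh"
  using t0 tt' t'1 hh0 hh1 by auto

lemma img_Lp: "path_image Lp = \<gamma> ` {t..t'}" using tt' by (simp add: path_image_subpath)
lemma img_Mmid: "path_image Mmid = \<gamma> ` {t'..1-hh}" using prm by (simp add: path_image_subpath)

lemma zS12: "z \<in> {z1, z2} \<Longrightarrow> z \<in> closed_segment z1 z2" by auto

lemma z_facts:
  assumes z: "z \<in> {z1, z2}"
  shows "z \<notin> path_image Lp" "z \<notin> path_image Mmid" "z \<notin> path_image Mend"
    "z \<notin> path_image chord" "z \<notin> path_image (linepath PP ZZ)" "z \<notin> path_image (linepath ZZ (\<gamma> t))"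
    "z \<notin> path_image (linepath (\<gamma> t) ZZ)" "z \<notin> path_image (linepath ZZ PP)"
proof -
  have zi: "z \<notin> \<gamma> ` {0..1}" using z_notin_img[OF z] by (simp add: path_image_def)
  have sub: "path_image (subpath u w \<gamma>) \<subseteq> \<gamma> ` {0..1}" if "u \<in> {0..1}" "w \<in> {0..1}" for u w
    using that by (auto simp: path_image_subpath)
  show "z \<notin> path_image Lp" "z \<notin> path_image Mmid" "z \<notin> path_image Mend"
    using zi sub prm by blast+
  have "closed_segment PP (\<gamma> t) \<subseteq> ConeA" by (rule closed_segment_subset[OF PP_cone v_cone convex_ConeA])
  then show "z \<notin> path_image chord" using z z_notin_cone by auto
  show "z \<notin> path_image (linepath PP ZZ)" "z \<notin> path_image (linepath ZZ PP)"
    using S12_PZ zS12[OF z] by (auto simp: closed_segment_commute)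
  show "z \<notin> path_image (linepath ZZ (\<gamma> t))" "z \<notin> path_image (linepath (\<gamma> t) ZZ)"
    using S12_Zv zS12[OF z] by (auto simp: closed_segment_commute)
qed

lemma wn_decomp:
  assumes z: "z \<in> {z1, z2}"
  shows "winding_number \<gamma> z = winding_number Lp z + winding_number K3 z + winding_number Tri z"
proof -
  note zf = z_facts[OF z]
  have zg: "z \<notin> path_image \<gamma>" by (rule z_notin_img[OF z])
  have 1: "winding_number \<gamma> z = winding_number Lp z + winding_number (subpath t' 1 \<gamma>) z"
    using winding_number_subpath_combine[OF pathg zg prm(1) prm(2) prm(4)] t_0 by simp
  have 2: "winding_number (subpath t' 1 \<gamma>) z = winding_number Mmid z + winding_number Mend z"
    using winding_number_subpath_combine[OF pathg zg prm(2) prm(3) prm(4)] by simp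
  have 3: "winding_number chord z = winding_number Mend z"
  proof (rule winding_number_paths_linear_eq)
    show "path Mend" using pathg prm by simp
    show "path chord" by simp
    show "pathstart chord = pathstart Mend" by (simp add: PP_def)
    show "pathfinish chord = pathfinish Mend" using c01 t_0 by simp
    show "z \<notin> closed_segment (Mend \<tau>) (chord \<tau>)" if "\<tau> \<in> {0..1}" for \<tau>
      using z_notin_Mseg[OF that z] .
  qed
  have pl: "path (linepath x y)" for x y :: complex by simp
  have 4: "winding_number Tri z = winding_number chord z + winding_number (linepath (\<gamma> t) ZZ) z + winding_number (linepath ZZ PP) z"
    unfolding Tri_def
    using zf by (simp add: winding_number_join not_in_path_image_join path_image_join)
  have 5: "winding_number (linepath (\<gamma> t) ZZ) z = - winding_number (linepath ZZ (\<gamma> t)) z"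
    using winding_number_reversepath[of "linepath ZZ (\<gamma> t)" z] zf by simp
  have 6: "winding_number (linepath ZZ PP) z = - winding_number (linepath PP ZZ) z"
    using winding_number_reversepath[of "linepath PP ZZ" z] zf by simp
  have pM: "path Mmid" using pathg prm by simp
  have 7: "winding_number K3 z = winding_number Mmid z + winding_number (linepath PP ZZ) z + winding_number (linepath ZZ (\<gamma> t)) z"
    unfolding K3_def
    using zf pM by (simp add: winding_number_join not_in_path_image_join path_image_join PP_def)
  show ?thesis using 1 2 3 4 5 6 7 by (simp add: algebra_simps)
qed

end

context xing3 begin

lemma wL_eq: "winding_number Lp z1 = winding_number Lp z2"
proof (rule winding_number_eq[where S = "closed_segment z1 z2"])
  show "path Lp" using pathg prm by simp
  show "pathfinish Lp = pathstart Lp" using eqv by simp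
  show "closed_segment z1 z2 \<inter> path_image Lp = {}" using S12_L img_Lp by simp
qed auto

lemma wK3_eq: "winding_number K3 z1 = winding_number K3 z2"
proof (rule winding_number_eq[where S = "closed_segment z1 z2"])
  have pM: "path Mmid" using pathg prm by simp
  show "path K3" unfolding K3_def using pM by (simp add: PP_def)
  show "pathfinish K3 = pathstart K3" unfolding K3_def using eqv by simp
  have "path_image K3 = \<gamma> ` {t'..1-hh} \<union> (closed_segment PP ZZ \<union> closed_segment ZZ (\<gamma> t))"
    unfolding K3_def by (simp add: path_image_join img_Mmid PP_def)
  then show "closed_segment z1 z2 \<inter> path_image K3 = {}" using S12_M S12_PZ S12_Zv by blast
qed auto

lemma wT1: "winding_number Tri z1 = 0"
proof (rule winding_number_zero_outside[OF _ convex_Hpl[of "-hh/5"]])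
  show "path Tri" unfolding Tri_def by simp
  show "pathfinish Tri = pathstart Tri" unfolding Tri_def by simp
  show "z1 \<notin> Hpl (-hh/5)" using hh0 by (simp add: Hpl_def z1_def)
  have P: "PP \<in> Hpl (-hh/5)" using PP_c by (auto simp: Hpl_def)
  have V: "\<gamma> t \<in> Hpl (-hh/5)" using hh0 by (simp add: Hpl_def)
  have Z: "ZZ \<in> Hpl (-hh/5)" using hh0 by (simp add: Hpl_def ZZ_def)
  show "path_image Tri \<subseteq> Hpl (-hh/5)"
    unfolding Tri_def using closed_segment_subset[OF _ _ convex_Hpl] P V Z
    by (simp add: path_image_join)
qed

definition "Xe A B = (be B - be A) * (al B - al z2) - (al B - al A) * (be B - be z2)"

lemma Xe_pos: "Xe PP (\<gamma> t) > 0" "Xe (\<gamma> t) ZZ > 0" "Xe ZZ PP > 0"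
proof -
  have c2: "al z2 = -(hh/2)" "be z2 = hh/2" by (simp_all add: z2_def)
  have cv: "al (\<gamma> t) = 0" "be (\<gamma> t) = 0" by simp_all
  have cz: "al ZZ = 0" "be ZZ = 2*hh" by (simp_all add: ZZ_def)
  have "al PP + be PP < 0" using PP_c hh0 by arith
  then have "0 < (hh/2) * (-(al PP + be PP))" using hh0 by (intro mult_pos_pos) auto
  moreover have "Xe PP (\<gamma> t) = (hh/2) * (-(al PP + be PP))"
    unfolding Xe_def c2 cv by (simp add: algebra_simps)
  ultimately show "Xe PP (\<gamma> t) > 0" by simp
  have "Xe (\<gamma> t) ZZ = hh * hh" unfolding Xe_def c2 cv cz by (simp add: algebra_simps)
  then show "Xe (\<gamma> t) ZZ > 0" using hh0 by simp
  have "be PP / 2 - 3 * al PP / 2 - hh > 0" using PP_c hh0 by arith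
  then have "0 < hh * (be PP / 2 - 3 * al PP / 2 - hh)" using hh0 by simp
  moreover have "Xe ZZ PP = hh * (be PP / 2 - 3 * al PP / 2 - hh)"
    unfolding Xe_def c2 cz by (simp add: algebra_simps)
  ultimately show "Xe ZZ PP > 0" by simp
qed

lemma edge_facts:
  assumes X: "Xe A B > 0"
  shows "z2 \<notin> path_image (linepath A B)"
    and "0 < Im (cnj (g' t) * g' t') \<Longrightarrow> 0 < Re (winding_number (linepath A B) z2)"
    and "Im (cnj (g' t) * g' t') < 0 \<Longrightarrow> Re (winding_number (linepath A B) z2) < 0"
proof -
  have I1: "Im ((B - A) * cnj (B - z2)) = Im (cnj (g' t) * g' t') * Xe A B"
    unfolding Xe_def by (rule Im_edge)
  have I2: "Im ((A - B) * cnj (A - z2)) = - Im (cnj (g' t) * g' t') * Xe A B"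
    unfolding Xe_def by (rule Im_edge_rev)
  show "z2 \<notin> path_image (linepath A B)"
  proof
    assume "z2 \<in> path_image (linepath A B)"
    then have "Im ((B - A) * cnj (B - z2)) = 0" by (intro seg_Im0) simp
    then show False using I1 X Dnz by simp
  qed
  show "0 < Re (winding_number (linepath A B) z2)" if "0 < Im (cnj (g' t) * g' t')"
    using that X I1 by (intro winding_number_linepath_pos_lt) simp
  show "Re (winding_number (linepath A B) z2) < 0" if "Im (cnj (g' t) * g' t') < 0"
  proof (rule winding_number_linepath_neg_lt)
    show "0 < Im ((A - B) * cnj (A - z2))" using that X I2 by (simp add: mult_neg_pos)
  qed
qed

lemma wT2: "winding_number Tri z2 \<noteq> 0"
proof -
  note e1 = edge_facts[OF Xe_pos(1)] and e2 = edge_facts[OF Xe_pos(2)] and e3 = edge_facts[OF Xe_pos(3)]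
  have "Re (winding_number Tri z2) = Re (winding_number (linepath PP (\<gamma> t)) z2) +
     Re (winding_number (linepath (\<gamma> t) ZZ) z2) + Re (winding_number (linepath ZZ PP) z2)"
    unfolding Tri_def using e1(1) e2(1) e3(1)
    by (simp add: winding_number_join not_in_path_image_join path_image_join)
  moreover have "Im (cnj (g' t) * g' t') > 0 \<or> Im (cnj (g' t) * g' t') < 0" using Dnz by linarith
  ultimately have "Re (winding_number Tri z2) \<noteq> 0"
    using e1(2,3) e2(2,3) e3(2,3) by (elim disjE) (simp_all add: add_pos_pos add_neg_neg)
  then show ?thesis by auto
qed

lemma wn_jump: "winding_number \<gamma> z1 \<noteq> winding_number \<gamma> z2"
  using wn_decomp[of z1] wn_decomp[of z2] wL_eq wK3_eq wT1 wT2 by simp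

end

lemma inside_conn: "connected_component (- S) x y \<Longrightarrow> x \<in> inside S \<Longrightarrow> y \<in> inside S"
proof -
  assume c: "connected_component (- S) x y" and x: "x \<in> inside S"
  have "y \<in> connected_component_set (- S) x" using c by simp
  then have e: "connected_component_set (- S) y = connected_component_set (- S) x"
    by (rule connected_component_eq)
  have "y \<notin> S" using connected_component_in[OF c] by simp
  then show ?thesis using x e by (simp add: inside_def)
qed

lemma aux_div: "(K::real) > 0 \<Longrightarrow> e / (2*K) * K = e/2" by (simp add: field_simps)

context xing3 begin

lemma z2_Rg: "z2 \<in> Rg"
  using hh0 small_norm[of z2] by (simp add: Rg_def z2_def)

lemma closure_diag:
  assumes s: "\<bar>s\<bar> = 1"
  shows "\<gamma> t \<in> closure (connected_component_set (- path_image \<gamma>) (pt (-(hh/2)) (s*(hh/2))))"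
  unfolding closure_approachable
proof (intro allI impI)
  fix e :: real assume e: "e > 0"
  define \<sigma> where "\<sigma> = min (hh/2) (e / (2 * (NAB + 1)))"
  have s0: "\<sigma> > 0" using e hh0 by (simp add: \<sigma>_def add_nonneg_pos)
  have s1: "\<sigma> \<le> hh/2" unfolding \<sigma>_def by (rule min.cobounded1)
  have s2: "\<sigma> * (NAB + 1) \<le> e/2"
  proof -
    have "\<sigma> \<le> e / (2 * (NAB + 1))" unfolding \<sigma>_def by (rule min.cobounded2)
    then have "\<sigma> * (NAB + 1) \<le> e / (2 * (NAB + 1)) * (NAB + 1)"
      by (intro mult_right_mono) auto
    also have "\<dots> = e/2" by (rule aux_div) (simp add: add_nonneg_pos)
    finally show ?thesis .
  qed
  define y where "y = pt (-\<sigma>) (s*\<sigma>)"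
  have "dist y (\<gamma> t) \<le> \<bar>-\<sigma>\<bar> * norm (g' t) + \<bar>s*\<sigma>\<bar> * norm (g' t')"
    using norm_pt[of "-\<sigma>" "s*\<sigma>"] by (simp add: dist_norm y_def)
  also have "\<dots> = \<sigma> * NAB" using s s0 by (simp add: abs_mult algebra_simps)
  also have "\<dots> < e" using s2 s0 e by (simp add: algebra_simps)
  finally have dy: "dist y (\<gamma> t) < e" .
  have seg: "closed_segment (pt (-(hh/2)) (s*(hh/2))) y \<subseteq> - path_image \<gamma>"
  proof
    fix w assume "w \<in> closed_segment (pt (-(hh/2)) (s*(hh/2))) y"
    then obtain \<mu> where mu: "0 \<le> \<mu>" "\<mu> \<le> 1" "w = (1-\<mu>) *\<^sub>R pt (-(hh/2)) (s*(hh/2)) + \<mu> *\<^sub>R y"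
      using seg_param by blast
    define m where "m = (1-\<mu>) * (hh/2) + \<mu> * \<sigma>"
    have w: "w = pt (-m) (s*m)" unfolding mu(3) y_def pt_comb m_def by (simp add: algebra_simps)
    have m1: "(1-\<mu>) * (hh/2) \<ge> (1-\<mu>) * \<sigma>" using mu s1 by (intro mult_left_mono) auto
    have m2: "(1-\<mu>) * (hh/2) + \<mu> * (hh/2) = hh/2" by (simp add: field_simps)
    have m3: "\<mu> * \<sigma> \<le> \<mu> * (hh/2)" using mu s1 by (intro mult_left_mono) auto
    have m4: "(1-\<mu>) * \<sigma> + \<mu> * \<sigma> = \<sigma>" by (simp add: algebra_simps)
    have m5: "0 \<le> (1-\<mu>) * (hh/2)" "0 \<le> \<mu> * \<sigma>" using mu hh0 s0 by auto
    have mm: "\<sigma> \<le> m" "m \<le> hh/2" using m1 m2 m3 m4 unfolding m_def by linarith+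
    have "\<bar>al w\<bar> = \<bar>be w\<bar>" "al w \<noteq> 0" "\<bar>al w\<bar> \<le> hh/2" "\<bar>be w\<bar> \<le> hh/2"
      using w mm s s0 by (simp_all add: abs_mult)
    then show "w \<in> - path_image \<gamma>"
      using diag_notin[of w] small_norm[of w] by (auto simp: path_image_def)
  qed
  have "connected_component (- path_image \<gamma>) (pt (-(hh/2)) (s*(hh/2))) y"
    by (rule connected_componentI[OF connected_segment seg]) auto
  then show "\<exists>y\<in>connected_component_set (- path_image \<gamma>) (pt (-(hh/2)) (s*(hh/2))). dist y (\<gamma> t) < e"
    using dy by blast
qed

lemma faces3:
  assumes ins: "z2 \<in> inside (\<gamma> ` {t..t'})"
  shows "\<exists>F1 F2. F1 \<in> components (- path_image \<gamma>) \<and> F2 \<in> components (- path_image \<gamma>) \<and>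
    \<gamma> 0 \<in> closure F1 \<and> \<gamma> 0 \<in> closure F2 \<and> F1 \<noteq> F2 \<and>
    F1 \<noteq> outside (path_image \<gamma>) \<and> F2 \<noteq> outside (path_image \<gamma>)"
proof -
  define F1 where "F1 = connected_component_set (- path_image \<gamma>) z1"
  define F2 where "F2 = connected_component_set (- path_image \<gamma>) z2"
  have zn1: "z1 \<in> - path_image \<gamma>" and zn2: "z2 \<in> - path_image \<gamma>" using z_notin_img by auto
  have c1: "F1 \<in> components (- path_image \<gamma>)" unfolding F1_def by (rule componentsI[OF zn1])
  have c2: "F2 \<in> components (- path_image \<gamma>)" unfolding F2_def by (rule componentsI[OF zn2])
  have "\<gamma> t \<in> closure F1" using closure_diag[of "-1"] by (simp add: F1_def z1_def)
  then have cl1: "\<gamma> 0 \<in> closure F1" using t_0 by simp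
  have "\<gamma> t \<in> closure F2" using closure_diag[of "1"] by (simp add: F2_def z2_def)
  then have cl2: "\<gamma> 0 \<in> closure F2" using t_0 by simp
  have z1F: "z1 \<in> F1" and z2F: "z2 \<in> F2" using zn1 zn2 by (simp_all add: F1_def F2_def)
  have ne: "F1 \<noteq> F2"
  proof
    assume "F1 = F2"
    then have "z2 \<in> F1" using z2F by simp
    have "winding_number \<gamma> z1 = winding_number \<gamma> z2"
    proof (rule winding_number_eq[OF pathg _ z1F \<open>z2 \<in> F1\<close>])
      show "pathfinish \<gamma> = pathstart \<gamma>" using c01 by (simp add: pathfinish_def pathstart_def)
      show "connected F1" by (simp add: F1_def)
      show "F1 \<inter> path_image \<gamma> = {}" using connected_component_subset[of "- path_image \<gamma>" z1]
        by (auto simp: F1_def)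
    qed
    then show False using wn_jump by simp
  qed
  have "connected_component (- (\<gamma> ` {t..t'})) z2 z1"
    by (rule connected_componentI[OF connected_segment]) (use S12_L in auto)
  then have ins1: "z1 \<in> inside (\<gamma> ` {t..t'})" using inside_conn ins by blast
  have sub: "\<gamma> ` {t..t'} \<subseteq> path_image \<gamma>" using t0 t'1 by (auto simp: path_image_def)
  have no: "z \<notin> outside (path_image \<gamma>)" if "z \<in> inside (\<gamma> ` {t..t'})" for z
    using outside_mono[OF sub] that inside_Int_outside[of "\<gamma> ` {t..t'}"] by blast
  have o1: "F1 \<noteq> outside (path_image \<gamma>)" using no[OF ins1] z1F by blast
  have o2: "F2 \<noteq> outside (path_image \<gamma>)" using no[OF ins] z2F by blast
  show ?thesis using c1 c2 cl1 cl2 ne o1 o2 by blast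
qed

end

context xing2 begin

lemma small_delta: "0 < \<delta> \<Longrightarrow> \<delta> < r0 / (3 * (NAB + 1)) \<Longrightarrow> \<delta> * (11/5) * NAB < r0"
proof -
  assume d: "0 < \<delta>" "\<delta> < r0 / (3 * (NAB + 1))"
  have K: "NAB + 1 > 0" by (simp add: add_nonneg_pos)
  have "\<delta> * (3 * (NAB + 1)) < r0" using d K by (simp add: pos_less_divide_eq)
  moreover have "\<delta> * ((11/5) * NAB) \<le> \<delta> * (3 * (NAB + 1))" using d by (intro mult_left_mono) auto
  then have "\<delta> * (11/5) * NAB \<le> \<delta> * (3 * (NAB + 1))" by (simp add: mult.assoc)
  ultimately show ?thesis by linarith
qed

lemma Rg_ne: "\<exists>z. z \<in> Rg"
proof -
  define \<sigma> where "\<sigma> = r0 / (2 * (NAB + 1))"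
  have K: "NAB + 1 > 0" by (simp add: add_nonneg_pos)
  have s0: "\<sigma> > 0" using r00 K by (simp add: \<sigma>_def)
  have "norm (pt (-\<sigma>) \<sigma> - \<gamma> t) \<le> \<bar>-\<sigma>\<bar> * norm (g' t) + \<bar>\<sigma>\<bar> * norm (g' t')" by (rule norm_pt)
  also have "\<dots> = \<sigma> * NAB" using s0 by (simp add: algebra_simps)
  also have "\<dots> < \<sigma> * (2 * (NAB + 1))" using s0 K by (intro mult_strict_left_mono) auto
  also have "\<dots> = r0" using K by (simp add: \<sigma>_def)
  finally have "pt (-\<sigma>) \<sigma> \<in> Rg" using s0 by (simp add: Rg_def)
  then show ?thesis by blast
qed

lemma outwards_from:
  assumes z: "z \<in> Rg" "z \<notin> inside (\<gamma> ` {t..t'})"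
  shows "\<exists>\<epsilon>>0. \<forall>\<delta>. 0 < \<delta> \<and> \<delta> < \<epsilon> \<longrightarrow> G (t-\<delta>) \<notin> inside (\<gamma> ` {t..t'}) \<and> G (t'+\<delta>) \<notin> inside (\<gamma> ` {t..t'})"
proof (intro exI[of _ "min h (r0 / (3 * (NAB + 1)))"] conjI allI impI)
  show "0 < min h (r0 / (3 * (NAB + 1)))" using h0 r00 by (simp add: add_nonneg_pos)
  fix \<delta> assume d: "0 < \<delta> \<and> \<delta> < min h (r0 / (3 * (NAB + 1)))"
  have d2: "\<delta> * (11/5) * NAB < r0" using d by (intro small_delta) auto
  have d1: "0 < \<delta>" "\<delta> < h" using d by auto
  note c1 = D_conn(1)[OF d1 d2 z(1)] and c2 = D_conn(2)[OF d1 d2 z(1)]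
  show "G (t-\<delta>) \<notin> inside (\<gamma> ` {t..t'})"
  proof
    assume "G (t-\<delta>) \<in> inside (\<gamma> ` {t..t'})"
    then have "z \<in> inside (\<gamma> ` {t..t'})" by (rule inside_conn[OF connected_component_sym[OF c1]])
    then show False using z(2) by simp
  qed
  show "G (t'+\<delta>) \<notin> inside (\<gamma> ` {t..t'})"
  proof
    assume "G (t'+\<delta>) \<in> inside (\<gamma> ` {t..t'})"
    then have "z \<in> inside (\<gamma> ` {t..t'})" by (rule inside_conn[OF connected_component_sym[OF c2]])
    then show False using z(2) by simp
  qed
qed

end

lemma pair_from_xy:
  fixes \<gamma> :: "real \<Rightarrow> complex" and x y :: real
  assumes "x \<in> {0..1}" "y \<in> {0..1}" "x < y" "\<gamma> x = \<gamma> y" "\<not> (x = 0 \<and> y = 1)" "\<gamma> 0 = \<gamma> 1"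
  shows "\<exists>s s'. 0 \<le> s \<and> s < s' \<and> s' < 1 \<and> \<gamma> s = \<gamma> s'"
proof (cases "y = 1")
  case True
  then have "x \<noteq> 0" using assms by auto
  then have "0 < x" "x < 1" using assms True by auto
  then show ?thesis using assms True by (intro exI[of _ 0] exI[of _ x]) auto
next
  case False
  then show ?thesis using assms by (intro exI[of _ x] exI[of _ y]) auto
qed

lemma card2_eq:
  assumes "card A = 2" "a \<in> A" "b \<in> A" "a \<noteq> b" "c \<in> A"
  shows "c = a \<or> c = b"
proof (rule ccontr)
  assume "\<not> (c = a \<or> c = b)"
  then have "card {a, b, c} = 3" using assms by auto
  moreover have "finite A" using assms(1) by (metis card.infinite zero_neq_numeral)
  moreover have "{a, b, c} \<subseteq> A" using assms by auto
  ultimately have "3 \<le> card A" by (metis card_mono)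
  then show False using assms(1) by simp
qed

theorem lemma8:
  fixes \<gamma> :: "real \<Rightarrow> complex"
  assumes "curveC \<gamma>"
    and "outer_basepoint \<gamma>"
    and "\<not> simple_path \<gamma>"
  shows "\<exists>t t'. outwards_loop \<gamma> t t'"
proof -
  from assms(1) have reg: "regular_curve \<gamma>" and gen: "generic_curve \<gamma>" by (auto simp: curveC_def)
  obtain g' where c01: "\<gamma> 0 = \<gamma> 1" and g01: "g' 0 = g' 1"
    and deriv: "\<forall>s\<in>{0..1}. (\<gamma> has_vector_derivative g' s) (at s within {0..1})"
    using reg unfolding regular_curve_def by blast
  have "\<forall>s\<in>{0..1}. continuous (at s within {0..1}) \<gamma>"
    using deriv by (meson has_vector_derivative_continuous)
  then have contg: "continuous_on {0..1} \<gamma>" by (simp add: continuous_on_eq_continuous_within)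
  then have pathg: "path \<gamma>" by (simp add: path_def)
  have tang: "tangent \<gamma> s = g' s" if "s \<in> {0..1}" for s
    using vector_derivative_within_closed_interval[of 0 1 s \<gamma> "g' s"] deriv that by (simp add: tangent_def)
  have finSI: "finite (self_intersections \<gamma>)"
    and gi: "\<And>p. p \<in> self_intersections \<gamma> \<Longrightarrow> card {s\<in>{0..<1}. \<gamma> s = p} = 2 \<and>
        (\<forall>s u. s \<in> {0..<1} \<and> u \<in> {0..<1} \<and> s \<noteq> u \<and> \<gamma> s = p \<and> \<gamma> u = p \<longrightarrow>
           Im (cnj (tangent \<gamma> s) * tangent \<gamma> u) \<noteq> 0)"
    using gen unfolding generic_curve_def by blast+
  have "\<not> loop_free \<gamma>" using assms(3) pathg by (simp add: simple_path_def)
  then obtain x y where xy: "x \<in> {0..1}" "y \<in> {0..1}" "\<gamma> x = \<gamma> y" "x \<noteq> y"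
      "\<not> (x = 0 \<and> y = 1)" "\<not> (x = 1 \<and> y = 0)"
    unfolding loop_free_def by blast
  have "\<exists>s s'. 0 \<le> s \<and> s < s' \<and> s' < 1 \<and> \<gamma> s = \<gamma> s'"
  proof (cases "x < y")
    case True then show ?thesis using pair_from_xy[of x y \<gamma>] xy c01 by auto
  next
    case False then show ?thesis using pair_from_xy[of y x \<gamma>] xy c01 by auto
  qed
  define S2 where "S2 = {s'. s' \<in> {0..<1} \<and> (\<exists>s. 0 \<le> s \<and> s < s' \<and> \<gamma> s = \<gamma> s')}"
  have S2ne: "S2 \<noteq> {}" using \<open>\<exists>s s'. _\<close> by (auto simp: S2_def)
  have fin_pre: "finite {s\<in>{0..<1}. \<gamma> s = p}" if "p \<in> self_intersections \<gamma>" for p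
    using gi[OF that] by (metis card.infinite zero_neq_numeral)
  have "S2 \<subseteq> (\<Union>p\<in>self_intersections \<gamma>. {s\<in>{0..<1}. \<gamma> s = p})"
  proof
    fix s' assume "s' \<in> S2"
    then obtain s where s: "s' \<in> {0..<1}" "0 \<le> s" "s < s'" "\<gamma> s = \<gamma> s'" by (auto simp: S2_def)
    then have "\<gamma> s' \<in> self_intersections \<gamma>"
      unfolding self_intersections_def by (intro CollectI exI[of _ s] exI[of _ s']) auto
    then show "s' \<in> (\<Union>p\<in>self_intersections \<gamma>. {s\<in>{0..<1}. \<gamma> s = p})" using s by auto
  qed
  then have finS2: "finite S2" using finSI fin_pre by (meson finite_UN_I finite_subset)
  define s1 where "s1 = Min S2"
  have s1S: "s1 \<in> S2" using Min_in[OF finS2 S2ne] by (simp add: s1_def)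
  have s1min: "\<And>s'. s' \<in> S2 \<Longrightarrow> s1 \<le> s'" using Min_le[OF finS2] by (simp add: s1_def)
  obtain s0 where s0: "0 \<le> s0" "s0 < s1" "\<gamma> s0 = \<gamma> s1" and s11: "0 \<le> s1" "s1 < 1"
    using s1S by (auto simp: S2_def)
  have SI: "\<gamma> s1 \<in> self_intersections \<gamma>"
    unfolding self_intersections_def using s0 s11 by (intro CollectI exI[of _ s0] exI[of _ s1]) auto
  have pre: "s = s0 \<or> s = s1" if "s \<in> {0..<1}" "\<gamma> s = \<gamma> s0" for s
    using card2_eq[OF conjunct1[OF gi[OF SI]], of s0 s1 s] s0 s11 that by auto
  have "Im (cnj (tangent \<gamma> s0) * tangent \<gamma> s1) \<noteq> 0"
    using conjunct2[OF gi[OF SI], rule_format, of s0 s1] s0 s11 by auto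
  then have trans: "Im (cnj (g' s0) * g' s1) \<noteq> 0"
    using tang[of s0] tang[of s1] s0 s11 by auto
  interpret X: xing \<gamma> g' s0 s1
    by unfold_locales (use deriv g01 c01 s0 s11 pre trans in auto)
  obtain h r0 where "xing2 \<gamma> g' s0 s1 h r0" using X.ex_xing2 by blast
  then interpret X2: xing2 \<gamma> g' s0 s1 h r0 .
  have key: "\<sigma> = s0 \<and> \<tau> = s1" if k: "0 \<le> \<sigma>" "\<sigma> < \<tau>" "\<tau> \<le> s1" "\<gamma> \<sigma> = \<gamma> \<tau>" for \<sigma> \<tau>
  proof -
    have "\<tau> \<in> S2" using k s11 by (auto simp: S2_def)
    then have "\<tau> = s1" using s1min k by force
    then have "\<gamma> \<sigma> = \<gamma> s0" using k s0 by simp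
    moreover have "\<sigma> \<in> {0..<1}" using k s11 \<open>\<tau> = s1\<close> by auto
    ultimately have "\<sigma> = s0 \<or> \<sigma> = s1" using pre by blast
    then show ?thesis using k \<open>\<tau> = s1\<close> by auto
  qed
  have Limg: "path_image (direct_split \<gamma> s0 s1) = \<gamma> ` {s0..s1}"
    using s0 by (simp add: direct_split_def path_image_subpath)
  have simple: "simple_path (subpath s0 s1 \<gamma>)"
  proof -
    have "path (subpath s0 s1 \<gamma>)" using pathg s0 s11 by simp
    moreover have "loop_free (subpath s0 s1 \<gamma>)"
      unfolding loop_free_def
    proof (intro ballI impI)
      fix a b :: real assume a: "a \<in> {0..1}" and b: "b \<in> {0..1}" and e: "subpath s0 s1 \<gamma> a = subpath s0 s1 \<gamma> b"
      define \<sigma>a where "\<sigma>a = (s1 - s0) * a + s0"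
      define \<sigma>b where "\<sigma>b = (s1 - s0) * b + s0"
      have ea: "\<gamma> \<sigma>a = \<gamma> \<sigma>b" using e by (simp add: subpath_def \<sigma>a_def \<sigma>b_def)
      have d0: "s1 - s0 > 0" using s0 by simp
      have ra: "0 \<le> (s1 - s0) * a" "(s1 - s0) * a \<le> (s1 - s0)" using a d0 by (auto simp: mult_left_le_one_le)
      have rb: "0 \<le> (s1 - s0) * b" "(s1 - s0) * b \<le> (s1 - s0)" using b d0 by (auto simp: mult_left_le_one_le)
      have A: "\<sigma>a = s0 \<longleftrightarrow> a = 0" "\<sigma>a = s1 \<longleftrightarrow> a = 1"
      proof -
        show "\<sigma>a = s0 \<longleftrightarrow> a = 0" using d0 by (auto simp: \<sigma>a_def)
        have "\<sigma>a = s1 \<longleftrightarrow> (s1 - s0) * a = (s1 - s0) * 1" unfolding \<sigma>a_def by (simp only: mult_1_right) linarith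
        also have "\<dots> \<longleftrightarrow> a = 1" using d0 by (simp only: mult_cancel_left) simp
        finally show "\<sigma>a = s1 \<longleftrightarrow> a = 1" .
      qed
      have B: "\<sigma>b = s0 \<longleftrightarrow> b = 0" "\<sigma>b = s1 \<longleftrightarrow> b = 1"
      proof -
        show "\<sigma>b = s0 \<longleftrightarrow> b = 0" using d0 by (auto simp: \<sigma>b_def)
        have "\<sigma>b = s1 \<longleftrightarrow> (s1 - s0) * b = (s1 - s0) * 1" unfolding \<sigma>b_def by (simp only: mult_1_right) linarith
        also have "\<dots> \<longleftrightarrow> b = 1" using d0 by (simp only: mult_cancel_left) simp
        finally show "\<sigma>b = s1 \<longleftrightarrow> b = 1" .
      qed
      have AB: "\<sigma>a = \<sigma>b \<longleftrightarrow> a = b" using d0 by (auto simp: \<sigma>a_def \<sigma>b_def)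
      have sa: "0 \<le> \<sigma>a" "\<sigma>a \<le> s1" unfolding \<sigma>a_def using ra s0 by linarith+
      have sb: "0 \<le> \<sigma>b" "\<sigma>b \<le> s1" unfolding \<sigma>b_def using rb s0 by linarith+
      consider "\<sigma>a = \<sigma>b" | "\<sigma>a < \<sigma>b" | "\<sigma>b < \<sigma>a" by linarith
      then show "a = b \<or> a = 0 \<and> b = 1 \<or> a = 1 \<and> b = 0"
      proof cases
        case 1 then show ?thesis using AB by simp
      next
        case 2
        have "\<sigma>a = s0 \<and> \<sigma>b = s1" by (rule key[OF sa(1) 2 sb(2) ea])
        then show ?thesis using A B by simp
      next
        case 3
        have "\<sigma>b = s0 \<and> \<sigma>a = s1" by (rule key[OF sb(1) 3 sa(2) ea[symmetric]])
        then show ?thesis using A B by simp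
      qed
    qed
    ultimately show ?thesis by (simp add: simple_path_def)
  qed
  have isloop: "is_loop \<gamma> s0 s1"
    using s0 s11 simple by (simp add: is_loop_def is_split_pair_def direct_split_def)
  define Inc where "Inc = {F \<in> faces \<gamma>. \<gamma> 0 \<in> closure F}"
  have cI: "card Inc = 2" and eI: "ext_face \<gamma> \<in> Inc"
    using assms(2) unfolding outer_basepoint_def Let_def Inc_def by auto
  have main: "\<exists>z\<in>X2.Rg. z \<notin> inside (\<gamma> ` {s0..s1})"
  proof (cases "s0 = 0")
    case True
    define hh where "hh = min (h/2) (r0 / (2 * (norm (g' s0) + norm (g' s1) + 1)))"
    have K: "norm (g' s0) + norm (g' s1) + 1 > 0" by (simp add: add_nonneg_pos)
    have hh0: "0 < hh" using X2.h0 X2.r00 K by (simp add: hh_def)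
    have hhh: "hh < h" using X2.h0 by (simp add: hh_def)
    have "hh \<le> r0 / (2 * (norm (g' s0) + norm (g' s1) + 1))" by (simp add: hh_def)
    then have "hh * (2 * (norm (g' s0) + norm (g' s1) + 1)) \<le> r0" using K by (simp add: pos_le_divide_eq)
    moreover have "hh * (norm (g' s0) + norm (g' s1)) < hh * (2 * (norm (g' s0) + norm (g' s1) + 1))"
      using hh0 K by (intro mult_strict_left_mono) auto
    ultimately have hhr: "hh * (norm (g' s0) + norm (g' s1)) < r0" by linarith
    interpret X3: xing3 \<gamma> g' s0 s1 h r0 hh
      by unfold_locales (use True hh0 hhh hhr in auto)
    show ?thesis
    proof (intro bexI[of _ X3.z2] notI)
      show "X3.z2 \<in> X2.Rg" by (rule X3.z2_Rg)
      assume ins: "X3.z2 \<in> inside (\<gamma> ` {s0..s1})"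
      obtain F1 F2 where F: "F1 \<in> components (- path_image \<gamma>)" "F2 \<in> components (- path_image \<gamma>)"
        "\<gamma> 0 \<in> closure F1" "\<gamma> 0 \<in> closure F2" "F1 \<noteq> F2"
        "F1 \<noteq> outside (path_image \<gamma>)" "F2 \<noteq> outside (path_image \<gamma>)"
        using X3.faces3[OF ins] by blast
      have "F1 \<in> Inc" "F2 \<in> Inc" using F by (auto simp: Inc_def faces_def)
      moreover have "ext_face \<gamma> \<noteq> F1" using F by (auto simp: ext_face_def)
      ultimately have "F2 = ext_face \<gamma> \<or> F2 = F1" using card2_eq[OF cI eI] by blast
      then show False using F by (auto simp: ext_face_def)
    qed
  next
    case False
    then have s0p: "0 < s0" using s0 by simp
    obtain z where z: "z \<in> X2.Rg" using X2.Rg_ne by blast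
    define K where "K = norm (g' s0) + norm (g' s1) + 1"
    have K0: "K > 0" by (simp add: K_def add_nonneg_pos)
    define \<delta>0 where "\<delta>0 = min (s0/2) (min (h/2) (r0 / (6*K)))"
    have d0: "0 < \<delta>0" using s0p X2.h0 X2.r00 K0 by (simp add: \<delta>0_def)
    have d1: "\<delta>0 < s0" "\<delta>0 < h" using s0p X2.h0 by (auto simp: \<delta>0_def)
    have "\<delta>0 \<le> r0 / (6*K)" by (simp add: \<delta>0_def)
    also have "\<dots> < r0 / (3*K)" using X2.r00 K0 by (simp add: divide_strict_left_mono)
    finally have d2: "\<delta>0 * (11/5) * (norm (g' s0) + norm (g' s1)) < r0"
      using X2.small_delta[OF d0] by (simp add: K_def add.assoc)
    have sub: "\<gamma> ` {s0..s1} \<subseteq> path_image \<gamma>" using s0 s11 by (auto simp: path_image_def)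
    have g0L: "\<gamma> 0 \<notin> \<gamma> ` {s0..s1}"
    proof
      assume "\<gamma> 0 \<in> \<gamma> ` {s0..s1}"
      then obtain \<tau> where \<tau>: "\<tau> \<in> {s0..s1}" "\<gamma> 0 = \<gamma> \<tau>" by auto
      then have "0 = s0 \<and> \<tau> = s1" using key[of 0 \<tau>] s0p by auto
      then show False using s0p by simp
    qed
    have g0cl: "\<gamma> 0 \<in> closure (outside (path_image \<gamma>))" using eI by (simp add: Inc_def ext_face_def)
    have clL: "closed (\<gamma> ` {s0..s1})"
    proof -
      have "continuous_on {s0..s1} \<gamma>" by (rule continuous_on_subset[OF contg]) (use s0 s11 in auto)
      then show ?thesis by (intro compact_imp_closed compact_continuous_image) auto
    qed
    have g0ni: "\<gamma> 0 \<notin> inside (\<gamma> ` {s0..s1})"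
    proof
      assume gi0: "\<gamma> 0 \<in> inside (\<gamma> ` {s0..s1})"
      have "inside (\<gamma> ` {s0..s1}) \<inter> closure (outside (path_image \<gamma>)) \<noteq> {}" using gi0 g0cl by blast
      then have "inside (\<gamma> ` {s0..s1}) \<inter> outside (path_image \<gamma>) \<noteq> {}"
        using open_Int_closure_eq_empty[OF open_inside[OF clL]] by blast
      then show False using outside_mono[OF sub] inside_Int_outside[of "\<gamma> ` {s0..s1}"] by blast
    qed
    have conn: "connected_component (- (\<gamma> ` {s0..s1})) (\<gamma> 0) (\<gamma> (s0 - \<delta>0))"
    proof (rule connected_componentI[of "\<gamma> ` {0..s0-\<delta>0}"])
      have "continuous_on {0..s0-\<delta>0} \<gamma>" by (rule continuous_on_subset[OF contg]) (use d0 d1 s0 s11 in auto)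
      then show "connected (\<gamma> ` {0..s0-\<delta>0})" by (intro connected_continuous_image) auto
      show "\<gamma> ` {0..s0-\<delta>0} \<subseteq> - (\<gamma> ` {s0..s1})"
      proof
        fix w assume "w \<in> \<gamma> ` {0..s0-\<delta>0}"
        then obtain \<sigma> where \<sigma>: "\<sigma> \<in> {0..s0-\<delta>0}" "w = \<gamma> \<sigma>" by auto
        show "w \<in> - (\<gamma> ` {s0..s1})"
        proof
          assume "w \<in> \<gamma> ` {s0..s1}"
          then obtain \<tau> where \<tau>: "\<tau> \<in> {s0..s1}" "w = \<gamma> \<tau>" by auto
          have "\<sigma> = s0 \<and> \<tau> = s1" using key[of \<sigma> \<tau>] \<sigma> \<tau> d0 by auto
          then show False using \<sigma> d0 by auto
        qed
      qed
      show "\<gamma> 0 \<in> \<gamma> ` {0..s0-\<delta>0}" using d1 by auto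
      show "\<gamma> (s0 - \<delta>0) \<in> \<gamma> ` {0..s0-\<delta>0}" using d1 by auto
    qed
    have G: "periodic_ext \<gamma> (s0 - \<delta>0) = \<gamma> (s0 - \<delta>0)" using d0 d1 s11 s0 by (intro X2.Gid) auto
    have c2: "connected_component (- (\<gamma> ` {s0..s1})) z (periodic_ext \<gamma> (s0 - \<delta>0))"
      by (rule X2.D_conn(1)[OF d0 d1(2) d2 z])
    have "z \<notin> inside (\<gamma> ` {s0..s1})"
    proof
      assume "z \<in> inside (\<gamma> ` {s0..s1})"
      then have "\<gamma> (s0 - \<delta>0) \<in> inside (\<gamma> ` {s0..s1})" using inside_conn c2 G by metis
      then have "\<gamma> 0 \<in> inside (\<gamma> ` {s0..s1})" using inside_conn connected_component_sym[OF conn] by metis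
      then show False using g0ni by simp
    qed
    then show ?thesis using z by blast
  qed
  then obtain z where z: "z \<in> X2.Rg" "z \<notin> inside (\<gamma> ` {s0..s1})" by blast
  obtain \<epsilon> where "\<epsilon> > 0" and eps: "\<forall>\<delta>. 0 < \<delta> \<and> \<delta> < \<epsilon> \<longrightarrow>
      periodic_ext \<gamma> (s0-\<delta>) \<notin> inside (\<gamma> ` {s0..s1}) \<and> periodic_ext \<gamma> (s1+\<delta>) \<notin> inside (\<gamma> ` {s0..s1})"
    using X2.outwards_from[OF z] by blast
  have "outwards_loop \<gamma> s0 s1"
    unfolding outwards_loop_def Limg using isloop \<open>\<epsilon> > 0\<close> eps by blast
  then show ?thesis by blast
qed


end
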